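(* Let $f$ satisfy the standing assumption described in the context, let $\alpha,\beta>0$, $\epsilon'>0$, $0<\eta_x\le(9L_\Phi+18\alpha+28\beta)^{-1}$, and consider the sequence generated by Cubic-GDA. Let $T'=\min\{t\ge 1:\ \max(\|s_{t-1}\|,\|s_t\|)\le\epsilon'\}$ ($T'=\infty$ if no such $t$). Suppose that for all integers $0\le t\le T'-1$, $$\|\nabla\Phi(x_t)-\nabla_1 f(x_t,y_{t+1})\|\le \beta(\|s_t\|^2+\epsilon'^2),\qquad \|\nabla^2\Phi(x_t)-G(x_t,y_{t+1})\|\le \alpha(\|s_t\|+\epsilon').$$ If $T\ge \frac{\Phi(x_0)-\Phi^*+(L_\Phi+3\alpha+4\beta)\epsilon'^3}{(L_\Phi+\alpha+\beta)\epsilon'^3}$, then $T'\le \frac{\Phi(x_0)-\Phi^*+(L_\Phi+3\alpha+4\beta)\epsilon'^3}{(L_\Phi+\alpha+\beta)\epsilon'^3}\le T$, and $$\|\nabla\Phi(x_{T'})\|\le\Big(\frac{1}{2\eta_x}+L_\Phi+2\alpha+2\beta\Big)\epsilon'^2,\qquad \nabla^2\Phi(x_{T'})\succeq-\Big(\frac{1}{2\eta_x}+L_\Phi+2\alpha\Big)\epsilon' I.$$ The same conclusion holds for Stochastic Cubic-GDA (finite-sum setting described in the context) when the two error bounds hold with $\nabla_1 f(x_t,y_{t+1})$, $G(x_t,y_{t+1})$ replaced by $\widehat\nabla_1 f(x_t,y_{t+1})$, $\widehat G(x_t,y_{t+1})$.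
   Context: Standing assumption: $f:\mathbb{R}^m\times\mathbb{R}^n\to\mathbb{R}$ is twice continuously differentiable; $\nabla f$ is $L_1$-Lipschitz; $y\mapsto f(x,y)$ is $\mu$-strongly concave for each $x$ ($\mu>0$); the Jacobian blocks $\nabla_{11}f,\nabla_{12}f,\nabla_{21}f,\nabla_{22}f$ are $L_2$-Lipschitz in $(x,y)$; $\Phi(x):=\max_y f(x,y)$ is bounded below with compact sub-level sets; $\Phi^*:=\min_x\Phi(x)$. Let $\kappa=L_1/\mu$, $L_\Phi=L_2(1+\kappa)^3$, $G(x,y)=\big[\nabla_{11} f - \nabla_{12} f (\nabla_{22} f)^{-1} \nabla_{21} f\big](x,y)$ ($\nabla_{12}f$ the Jacobian of $\nabla_1 f$ in $y$, $\nabla_{21}f$ that of $\nabla_2 f$ in $x$). Matrix norms are spectral. Cubic-GDA: given $x_0,y_0,\eta_x,\eta_y>0,\epsilon'>0$ and integers $N_t\ge0$; convention $\|s_0\|:=\epsilon'$. For $t=0,1,2,\dots$: $\widetilde y_0=y_t$, $\widetilde y_{k+1}=\widetilde y_k+\eta_y\nabla_2 f(x_t,\widetilde y_k)$ ($k<N_t$), $y_{t+1}=\widetilde y_{N_t}$; $s_{t+1}$ a global minimizer of $\nabla_1 f(x_t,y_{t+1})^\top s+\tfrac12 s^\top G(x_t,y_{t+1})s+\tfrac{1}{6\eta_x}\|s\|^3$; $x_{t+1}=x_t+s_{t+1}$. Stochastic Cubic-GDA: $f=\frac1N\sum_{i=1}^N f_i$, each $f_i$ twice continuously differentiable and $\mu$-strongly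 concave in $y$; same outer recursion except $y_{t+1}=\sum_{k=0}^{N_t-1}\frac{2k}{N_t(N_t-1)}\widetilde y_k$ with $\widetilde y_0=y_t$, $\widetilde y_{k+1}=\widetilde y_k+\frac{2}{\mu(k+1)}\nabla_2 f_{\xi_k}(x_t,\widetilde y_k)$ ($\xi_k$ a sampled index), and the cubic model uses minibatch estimators $\widehat\nabla_1 f=\frac1{|B_1|}\sum_{i\in B_1}\nabla_1 f_i$, $\widehat\nabla_{k\ell}f=\frac1{|B_{k\ell}|}\sum_{i\in B_{k\ell}}\nabla_{k\ell}f_i$, $\widehat G=\widehat\nabla_{11} f - \widehat\nabla_{12} f (\widehat\nabla_{22} f)^{-1} \widehat\nabla_{21} f$ at $(x_t,y_{t+1})$, for minibatches (multisets sampled with replacement) $B_1(t),B_{k\ell}(t)$. *)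

theory Defs
  imports "HOL-Analysis.Analysis" "HOL-Library.Multiset" "HOL-Library.Extended_Nat"
begin

text \<open>The first-order partial gradients are
 g1 (= grad_1 f) and g2 (= grad_2 f); the Jacobian blocks are H11, H12 (Jacobian of g1 in y),
 H21 (Jacobian of g2 in x), H22.\<close>

definition C2_data ::
  "((real^'m) \<times> (real^'n) \<Rightarrow> real) \<Rightarrow>
   ((real^'m) \<times> (real^'n) \<Rightarrow> real^'m) \<Rightarrow> ((real^'m) \<times> (real^'n) \<Rightarrow> real^'n) \<Rightarrow>
   ((real^'m) \<times> (real^'n) \<Rightarrow> real^'m^'m) \<Rightarrow> ((real^'m) \<times> (real^'n) \<Rightarrow> real^'n^'m) \<Rightarrow>
   ((real^'m) \<times> (real^'n) \<Rightarrow> real^'m^'n) \<Rightarrow> ((real^'m) \<times> (real^'n) \<Rightarrow> real^'n^'n) \<Rightarrow> bool"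
where
  "C2_data f g1 g2 H11 H12 H21 H22 \<longleftrightarrow>
     (\<forall>z. (f has_derivative (\<lambda>(h, k). g1 z \<bullet> h + g2 z \<bullet> k)) (at z)) \<and>
     (\<forall>z. ((\<lambda>w. (g1 w, g2 w)) has_derivative
            (\<lambda>(h, k). (H11 z *v h + H12 z *v k, H21 z *v h + H22 z *v k))) (at z)) \<and>
     continuous_on UNIV H11 \<and> continuous_on UNIV H12 \<and>
     continuous_on UNIV H21 \<and> continuous_on UNIV H22"

definition strongly_concave :: "real \<Rightarrow> ('a::real_normed_vector \<Rightarrow> real) \<Rightarrow> bool" where
  "strongly_concave \<mu> g \<longleftrightarrow>
     (\<forall>u v. \<forall>t\<in>{0..1}. t * g u + (1 - t) * g v + \<mu> / 2 * t * (1 - t) * (norm (u - v))^2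
                          \<le> g (t *\<^sub>R u + (1 - t) *\<^sub>R v))"

definition mnorm :: "real^'a^'b \<Rightarrow> real" where
  "mnorm A = onorm (\<lambda>v. A *v v)"

definition Phi :: "((real^'m) \<times> (real^'n) \<Rightarrow> real) \<Rightarrow> real^'m \<Rightarrow> real" where
  "Phi f x = (SUP y. f (x, y))"

definition vgrad :: "(real^'m \<Rightarrow> real) \<Rightarrow> real^'m \<Rightarrow> real^'m" where
  "vgrad F x = (\<chi> i. frechet_derivative F (at x) (axis i 1))"

definition hess :: "(real^'m \<Rightarrow> real) \<Rightarrow> real^'m \<Rightarrow> real^'m^'m" where
  "hess F x = matrix (frechet_derivative (vgrad F) (at x))"

definition standing_assumption ::
  "((real^'m) \<times> (real^'n) \<Rightarrow> real) \<Rightarrow>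
   ((real^'m) \<times> (real^'n) \<Rightarrow> real^'m) \<Rightarrow> ((real^'m) \<times> (real^'n) \<Rightarrow> real^'n) \<Rightarrow>
   ((real^'m) \<times> (real^'n) \<Rightarrow> real^'m^'m) \<Rightarrow> ((real^'m) \<times> (real^'n) \<Rightarrow> real^'n^'m) \<Rightarrow>
   ((real^'m) \<times> (real^'n) \<Rightarrow> real^'m^'n) \<Rightarrow> ((real^'m) \<times> (real^'n) \<Rightarrow> real^'n^'n) \<Rightarrow>
   real \<Rightarrow> real \<Rightarrow> real \<Rightarrow> bool"
where
  "standing_assumption f g1 g2 H11 H12 H21 H22 L1 L2 \<mu> \<longleftrightarrow>
     C2_data f g1 g2 H11 H12 H21 H22 \<and>
     (\<forall>z z'. norm ((g1 z, g2 z) - (g1 z', g2 z')) \<le> L1 * norm (z - z')) \<and>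
     \<mu> > 0 \<and> (\<forall>x. strongly_concave \<mu> (\<lambda>y. f (x, y))) \<and>
     (\<forall>z z'. mnorm (H11 z - H11 z') \<le> L2 * norm (z - z')) \<and>
     (\<forall>z z'. mnorm (H12 z - H12 z') \<le> L2 * norm (z - z')) \<and>
     (\<forall>z z'. mnorm (H21 z - H21 z') \<le> L2 * norm (z - z')) \<and>
     (\<forall>z z'. mnorm (H22 z - H22 z') \<le> L2 * norm (z - z')) \<and>
     bdd_below (range (Phi f)) \<and> (\<forall>c. compact {x. Phi f x \<le> c})"

definition schurG :: "real^'m^'m \<Rightarrow> real^'n^'m \<Rightarrow> real^'m^'n \<Rightarrow> real^'n^'n \<Rightarrow> real^'m^'m" where
  "schurG A B C D = A - B ** matrix_inv D ** C"

definition cubic_model :: "real^'m \<Rightarrow> real^'m^'m \<Rightarrow> real \<Rightarrow> real^'m \<Rightarrow> real" where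
  "cubic_model g H \<eta> s = g \<bullet> s + 1/2 * (s \<bullet> (H *v s)) + 1 / (6 * \<eta>) * norm s ^ 3"

definition is_cubic_min :: "real^'m \<Rightarrow> real^'m^'m \<Rightarrow> real \<Rightarrow> real^'m \<Rightarrow> bool" where
  "is_cubic_min g H \<eta> s \<longleftrightarrow> (\<forall>s'. cubic_model g H \<eta> s \<le> cubic_model g H \<eta> s')"

text \<open>Deterministic Cubic-GDA trajectory (x_t, y_t, s_t); s 0 is a dummy with norm eps'.\<close>
definition cubic_gda ::
  "((real^'m) \<times> (real^'n) \<Rightarrow> real^'m) \<Rightarrow> ((real^'m) \<times> (real^'n) \<Rightarrow> real^'n) \<Rightarrow>
   ((real^'m) \<times> (real^'n) \<Rightarrow> real^'m^'m) \<Rightarrow> ((real^'m) \<times> (real^'n) \<Rightarrow> real^'n^'m) \<Rightarrow>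
   ((real^'m) \<times> (real^'n) \<Rightarrow> real^'m^'n) \<Rightarrow> ((real^'m) \<times> (real^'n) \<Rightarrow> real^'n^'n) \<Rightarrow>
   real \<Rightarrow> real \<Rightarrow> real \<Rightarrow> (nat \<Rightarrow> nat) \<Rightarrow>
   (nat \<Rightarrow> real^'m) \<Rightarrow> (nat \<Rightarrow> real^'n) \<Rightarrow> (nat \<Rightarrow> real^'m) \<Rightarrow> bool"
where
  "cubic_gda g1 g2 H11 H12 H21 H22 \<eta>x \<eta>y \<epsilon>' N x y s \<longleftrightarrow>
     norm (s 0) = \<epsilon>' \<and>
     (\<forall>t. y (Suc t) = ((\<lambda>w. w + \<eta>y *\<^sub>R g2 (x t, w)) ^^ N t) (y t) \<and>
          is_cubic_min (g1 (x t, y (Suc t)))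
             (schurG (H11 (x t, y (Suc t))) (H12 (x t, y (Suc t)))
                     (H21 (x t, y (Suc t))) (H22 (x t, y (Suc t)))) \<eta>x (s (Suc t)) \<and>
          x (Suc t) = x t + s (Suc t))"

fun sgd_iter ::
  "(nat \<Rightarrow> (real^'m) \<times> (real^'n) \<Rightarrow> real^'n) \<Rightarrow> real \<Rightarrow> (nat \<Rightarrow> nat) \<Rightarrow> real^'m \<Rightarrow> real^'n \<Rightarrow> nat \<Rightarrow> real^'n"
where
  "sgd_iter G2 \<mu> \<xi> x y0 0 = y0"
| "sgd_iter G2 \<mu> \<xi> x y0 (Suc k) =
     sgd_iter G2 \<mu> \<xi> x y0 k + (2 / (\<mu> * real (Suc k))) *\<^sub>R G2 (\<xi> k) (x, sgd_iter G2 \<mu> \<xi> x y0 k)"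

text \<open>Minibatch average over a multiset of indices (sampled with replacement).\<close>
definition mb_avg :: "nat multiset \<Rightarrow> (nat \<Rightarrow> 'a::real_vector) \<Rightarrow> 'a" where
  "mb_avg B F = (1 / real (size B)) *\<^sub>R (\<Sum>i\<in>#B. F i)"

definition scubic_gda ::
  "nat \<Rightarrow> (nat \<Rightarrow> (real^'m) \<times> (real^'n) \<Rightarrow> real^'m) \<Rightarrow> (nat \<Rightarrow> (real^'m) \<times> (real^'n) \<Rightarrow> real^'n) \<Rightarrow>
   (nat \<Rightarrow> (real^'m) \<times> (real^'n) \<Rightarrow> real^'m^'m) \<Rightarrow> (nat \<Rightarrow> (real^'m) \<times> (real^'n) \<Rightarrow> real^'n^'m) \<Rightarrow>
   (nat \<Rightarrow> (real^'m) \<times> (real^'n) \<Rightarrow> real^'m^'n) \<Rightarrow> (nat \<Rightarrow> (real^'m) \<times> (real^'n) \<Rightarrow> real^'n^'n) \<Rightarrow>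
   real \<Rightarrow> real \<Rightarrow> real \<Rightarrow> (nat \<Rightarrow> nat) \<Rightarrow> (nat \<Rightarrow> nat \<Rightarrow> nat) \<Rightarrow>
   (nat \<Rightarrow> nat multiset) \<Rightarrow> (nat \<Rightarrow> nat multiset) \<Rightarrow> (nat \<Rightarrow> nat multiset) \<Rightarrow>
   (nat \<Rightarrow> nat multiset) \<Rightarrow> (nat \<Rightarrow> nat multiset) \<Rightarrow>
   (nat \<Rightarrow> real^'m) \<Rightarrow> (nat \<Rightarrow> real^'n) \<Rightarrow> (nat \<Rightarrow> real^'m) \<Rightarrow> bool"
where
  "scubic_gda Nf G1 G2 H11 H12 H21 H22 \<mu> \<eta>x \<epsilon>' N \<xi> B1 B11 B12 B21 B22 x y s \<longleftrightarrow>
     norm (s 0) = \<epsilon>' \<and>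
     (\<forall>t. (\<forall>k. \<xi> t k < Nf) \<and>
          (\<forall>B\<in>{B1 t, B11 t, B12 t, B21 t, B22 t}. B \<noteq> {#} \<and> (\<forall>i\<in>#B. i < Nf)) \<and>
          y (Suc t) = (\<Sum>k<N t. (2 * real k / (real (N t) * (real (N t) - 1)))
                                 *\<^sub>R sgd_iter G2 \<mu> (\<xi> t) (x t) (y t) k) \<and>
          is_cubic_min (mb_avg (B1 t) (\<lambda>i. G1 i (x t, y (Suc t))))
             (schurG (mb_avg (B11 t) (\<lambda>i. H11 i (x t, y (Suc t))))
                     (mb_avg (B12 t) (\<lambda>i. H12 i (x t, y (Suc t))))
                     (mb_avg (B21 t) (\<lambda>i. H21 i (x t, y (Suc t))))
                     (mb_avg (B22 t) (\<lambda>i. H22 i (x t, y (Suc t))))) \<eta>x (s (Suc t)) \<and>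
          x (Suc t) = x t + s (Suc t))"

definition stop_time :: "(nat \<Rightarrow> real^'m) \<Rightarrow> real \<Rightarrow> enat" where
  "stop_time s \<epsilon>' =
     (if \<exists>t\<ge>1. max (norm (s (t - 1))) (norm (s t)) \<le> \<epsilon>'
      then enat (LEAST t. 1 \<le> t \<and> max (norm (s (t - 1))) (norm (s t)) \<le> \<epsilon>')
      else \<infinity>)"

end

theory Submission
  imports Defs
begin

lemma mv_expand:
  fixes G :: "real^'m^'m"
  shows "(s + t *\<^sub>R w) \<bullet> (G *v (s + t *\<^sub>R w)) =
     s \<bullet> (G *v s) + t * (s \<bullet> (G *v w) + w \<bullet> (G *v s)) + t^2 * (w \<bullet> (G *v w))"
  by (simp add: matrix_vector_right_distrib matrix_vector_mult_scaleR inner_add_left inner_add_right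
      algebra_simps power2_eq_square)

lemma norm_line_deriv:
  fixes s w :: "'a::real_inner"
  assumes "s \<noteq> 0"
  shows "((\<lambda>t. norm (s + t *\<^sub>R w) ^ 3) has_real_derivative (3 * norm s * (s \<bullet> w))) (at 0)"
proof -
  have d1: "((\<lambda>t. s + t *\<^sub>R w) has_derivative (\<lambda>h. h *\<^sub>R w)) (at 0)"
    by (auto intro!: derivative_eq_intros)
  have d2: "(norm has_derivative (\<lambda>h. h \<bullet> sgn s)) (at (s + 0 *\<^sub>R w))"
    using has_derivative_norm[OF assms] by simp
  have d3: "((\<lambda>t. norm (s + t *\<^sub>R w)) has_derivative (\<lambda>h. (h *\<^sub>R w) \<bullet> sgn s)) (at 0)"
    using has_derivative_compose[OF d1 d2] by (simp add: o_def)
  have d4: "((\<lambda>t. norm (s + t *\<^sub>R w)) has_real_derivative (sgn s \<bullet> w)) (at 0)"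
  proof -
    have e: "(\<lambda>h. (h *\<^sub>R w) \<bullet> sgn s) = (*) (sgn s \<bullet> w)" by (auto simp: inner_commute)
    show ?thesis unfolding has_field_derivative_def using d3 unfolding e .
  qed
  have "((\<lambda>t. norm (s + t *\<^sub>R w) ^ 3) has_real_derivative (of_nat 3 * ((sgn s \<bullet> w) * norm (s + 0 *\<^sub>R w) ^ (3 - Suc 0)))) (at 0)"
    by (rule DERIV_power[OF d4])
  moreover have "of_nat 3 * ((sgn s \<bullet> w) * norm (s + 0 *\<^sub>R w) ^ (3 - Suc 0)) = 3 * norm s * (s \<bullet> w)"
    using assms by (simp add: sgn_div_norm power2_eq_square)
  ultimately show ?thesis by (simp add: mult.assoc)
qed

lemma small_pos:
  fixes a K :: real
  assumes "\<And>t. 0 < t \<Longrightarrow> t < 1 \<Longrightarrow> 0 \<le> a + K * t"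
  shows "0 \<le> a"
proof (rule ccontr)
  assume "\<not> 0 \<le> a"
  hence a: "a < 0" by simp
  define t where "t = min (1/2) (-a / (2 * (\<bar>K\<bar> + 1)))"
  have "-a / (2 * (\<bar>K\<bar> + 1)) > 0" using a by (intro divide_pos_pos) auto
  hence t0: "0 < t" "t < 1" by (auto simp: t_def)
  have c: "2 * (\<bar>K\<bar> + 1) > 0" by simp
  have "t \<le> (-a) / (2 * (\<bar>K\<bar> + 1))" unfolding t_def by (rule min.cobounded2)
  hence "t * (2 * (\<bar>K\<bar> + 1)) \<le> -a" by (metis pos_le_divide_eq c)
  hence h1: "\<bar>K\<bar> * t + t \<le> -a / 2" by (simp add: algebra_simps)
  have "K * t \<le> \<bar>K\<bar> * t" using t0 by (simp add: mult_right_mono)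
  hence "a + K * t < 0" using h1 t0 a by linarith
  with assms[OF t0] show False by simp
qed

lemma cubic_line:
  fixes G :: "real^'m^'m"
  shows "cubic_model g G \<eta> (s + t *\<^sub>R w) =
     g \<bullet> s + t * (g \<bullet> w) + 1/2 * (s \<bullet> (G *v s) + t * (s \<bullet> (G *v w) + w \<bullet> (G *v s)) + t^2 * (w \<bullet> (G *v w)))
     + 1 / (6 * \<eta>) * norm (s + t *\<^sub>R w) ^ 3"
  unfolding cubic_model_def mv_expand by (simp add: inner_add_right)

lemma cubic_first_order:
  fixes G :: "real^'m^'m"
  assumes min: "is_cubic_min g G \<eta> s" and eta: "\<eta> > 0"
  shows "g \<bullet> w + (s \<bullet> (G *v w) + w \<bullet> (G *v s)) / 2 + norm s / (2 * \<eta>) * (s \<bullet> w) = 0"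
proof (cases "s = 0")
  case False
  define \<phi> where "\<phi> t = cubic_model g G \<eta> (s + t *\<^sub>R w)" for t
  have phi: "\<phi> = (\<lambda>t. g \<bullet> s + t * (g \<bullet> w) + 1/2 * (s \<bullet> (G *v s) + t * (s \<bullet> (G *v w) + w \<bullet> (G *v s)) + t^2 * (w \<bullet> (G *v w)))
     + 1 / (6 * \<eta>) * norm (s + t *\<^sub>R w) ^ 3)"
    unfolding \<phi>_def cubic_line by simp
  have D: "(\<phi> has_real_derivative (g \<bullet> w + 1/2 * (s \<bullet> (G *v w) + w \<bullet> (G *v s)) + 1 / (6 * \<eta>) * (3 * norm s * (s \<bullet> w)))) (at 0)"
    unfolding phi
    by (rule derivative_eq_intros norm_line_deriv[OF False] refl | simp)+
  have "\<forall>y. \<bar>0 - y\<bar> < 1 \<longrightarrow> \<phi> 0 \<le> \<phi> y"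
    using min unfolding is_cubic_min_def \<phi>_def by simp
  from DERIV_local_min[OF D zero_less_one this]
  have "g \<bullet> w + 1/2 * (s \<bullet> (G *v w) + w \<bullet> (G *v s)) + 1 / (6 * \<eta>) * (3 * norm s * (s \<bullet> w)) = 0" .
  thus ?thesis using eta by (simp add: field_simps)
next
  case True
  have key: "0 \<le> g \<bullet> u" for u
  proof (rule small_pos[of _ "\<bar>u \<bullet> (G *v u)\<bar> + 1/(6*\<eta>) * norm u ^ 3"])
    fix t :: real assume t: "0 < t" "t < 1"
    have "cubic_model g G \<eta> s \<le> cubic_model g G \<eta> (t *\<^sub>R u)" using min by (simp add: is_cubic_min_def)
    hence "0 \<le> t * (g \<bullet> u) + 1/2 * (t^2 * (u \<bullet> (G *v u))) + 1/(6*\<eta>) * (t^3 * norm u ^ 3)"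
      using True t by (simp add: cubic_model_def matrix_vector_mult_scaleR power_mult_distrib power2_eq_square)
    hence "0 \<le> t * (g \<bullet> u + t * (1/2 * (u \<bullet> (G *v u))) + t^2 * (1/(6*\<eta>) * norm u ^ 3))"
      by (simp add: algebra_simps power2_eq_square power3_eq_cube)
    hence h: "0 \<le> g \<bullet> u + t * (1/2 * (u \<bullet> (G *v u))) + t^2 * (1/(6*\<eta>) * norm u ^ 3)"
      using t by (simp add: zero_le_mult_iff)
    have "t * (1/2 * (u \<bullet> (G *v u))) \<le> t * \<bar>u \<bullet> (G *v u)\<bar>" using t by (intro mult_left_mono) auto
    moreover have "t^2 * (1/(6*\<eta>) * norm u ^ 3) \<le> t * (1/(6*\<eta>) * norm u ^ 3)"
      using t eta by (intro mult_right_mono) (auto simp: power2_eq_square)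
    ultimately show "0 \<le> g \<bullet> u + (\<bar>u \<bullet> (G *v u)\<bar> + 1/(6*\<eta>) * norm u ^ 3) * t"
      using h by (simp add: algebra_simps)
  qed
  have "0 \<le> g \<bullet> (-w)" by (rule key)
  hence "g \<bullet> w = 0" using key[of w] by simp
  thus ?thesis using True by simp
qed


lemma norm_line_sq:
  fixes v s :: "'a::real_inner"
  shows "(norm (v + t *\<^sub>R s))^2 = (norm v)^2 + 2 * t * (v \<bullet> s) + t^2 * (norm s)^2"
  unfolding power2_norm_eq_inner by (simp add: inner_add_left inner_add_right inner_commute algebra_simps power2_eq_square)

lemma cubic_second_order:
  fixes G :: "real^'m^'m"
  assumes min: "is_cubic_min g G \<eta> s" and eta: "\<eta> > 0"
  shows "0 \<le> v \<bullet> (G *v v) + norm s / (2 * \<eta>) * (norm v)^2"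
proof -
  define lam where "lam = norm s / (2 * \<eta>)"
  have lam0: "0 \<le> lam" using eta by (simp add: lam_def)
  have FO: "g \<bullet> w + (s \<bullet> (G *v w) + w \<bullet> (G *v s)) / 2 + lam * (s \<bullet> w) = 0" for w
    using cubic_first_order[OF min eta] by (simp add: lam_def)
  have dir: "0 \<le> u \<bullet> (G *v u) + lam * (norm u)^2" if us: "u \<bullet> s \<noteq> 0" for u
  proof -
    have u0: "u \<noteq> 0" using us by auto
    hence nu: "(norm u)^2 > 0" by simp
    define \<tau> where "\<tau> = -2 * (s \<bullet> u) / (norm u)^2"
    have tau0: "\<tau> \<noteq> 0" using us nu by (simp add: \<tau>_def inner_commute)
    define d where "d = \<tau> *\<^sub>R u"
    have sd: "2 * (s \<bullet> d) + (norm d)^2 = 0"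
    proof -
      have "2 * (s \<bullet> d) + (norm d)^2 = \<tau> * (2 * (s \<bullet> u) + \<tau> * (norm u)^2)"
        by (simp add: d_def power_mult_distrib power2_eq_square algebra_simps)
      also have "\<tau> * (norm u)^2 = -2 * (s \<bullet> u)" using nu by (simp add: \<tau>_def)
      finally show ?thesis by simp
    qed
    have nrm: "norm (s + 1 *\<^sub>R d) = norm s"
    proof -
      have "(norm (s + 1 *\<^sub>R d))^2 = (norm s)^2"
        using norm_line_sq[of s 1 d] sd by simp
      thus ?thesis by (simp add: power2_eq_iff_nonneg)
    qed
    have "cubic_model g G \<eta> s \<le> cubic_model g G \<eta> (s + 1 *\<^sub>R d)"
      using min by (simp add: is_cubic_min_def)
    hence "0 \<le> g \<bullet> d + 1/2 * (s \<bullet> (G *v d) + d \<bullet> (G *v s)) + 1/2 * (d \<bullet> (G *v d))"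
      unfolding cubic_line[of g G \<eta> s 1 d] nrm by (simp add: cubic_model_def algebra_simps)
    also have "g \<bullet> d + 1/2 * (s \<bullet> (G *v d) + d \<bullet> (G *v s)) = - lam * (s \<bullet> d)"
      using FO[of d] by simp
    also have "s \<bullet> d = -((norm d)^2 / 2)" using sd by simp
    finally have "0 \<le> d \<bullet> (G *v d) + lam * (norm d)^2" by simp
    also have "d \<bullet> (G *v d) + lam * (norm d)^2 = \<tau>^2 * (u \<bullet> (G *v u) + lam * (norm u)^2)"
      by (simp add: d_def matrix_vector_mult_scaleR power_mult_distrib power2_eq_square algebra_simps)
    finally show ?thesis using tau0 by (simp add: zero_le_mult_iff)
  qed
  show ?thesis
  proof (cases "s = 0")
    case True
    have "g \<bullet> g = 0" using FO[of g] True by simp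
    hence g0: "g = 0" by simp
    have "0 \<le> v \<bullet> (G *v v)"
    proof (rule small_pos[of _ "2 * (1/(6*\<eta>) * norm v ^ 3)"])
      fix t :: real assume t: "0 < t" "t < 1"
      have "cubic_model g G \<eta> s \<le> cubic_model g G \<eta> (t *\<^sub>R v)" using min by (simp add: is_cubic_min_def)
      hence "0 \<le> 1/2 * (t^2 * (v \<bullet> (G *v v))) + 1/(6*\<eta>) * (t^3 * norm v ^ 3)"
        using True g0 t by (simp add: cubic_model_def matrix_vector_mult_scaleR power_mult_distrib power2_eq_square)
      also have "1/2 * (t^2 * (v \<bullet> (G *v v))) + 1/(6*\<eta>) * (t^3 * norm v ^ 3)
          = t^2 / 2 * (v \<bullet> (G *v v) + 2 * (1/(6*\<eta>) * norm v ^ 3) * t)"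
        by (simp add: algebra_simps power2_eq_square power3_eq_cube)
      finally show "0 \<le> v \<bullet> (G *v v) + 2 * (1/(6*\<eta>) * norm v ^ 3) * t"
        using t by (simp add: zero_le_mult_iff)
    qed
    thus ?thesis using True by simp
  next
    case False
    show ?thesis
    proof (cases "v \<bullet> s = 0")
      case False
      thus ?thesis using dir by (simp add: lam_def)
    next
      case vs: True
      define B where "B = v \<bullet> (G *v s) + s \<bullet> (G *v v) + 2 * lam * (v \<bullet> s)"
      define Qs where "Qs = s \<bullet> (G *v s) + lam * (norm s)^2"
      have "0 \<le> v \<bullet> (G *v v) + lam * (norm v)^2"
      proof (rule small_pos[of _ "\<bar>B\<bar> + \<bar>Qs\<bar>"])
        fix t :: real assume t: "0 < t" "t < 1"
        have "(v + t *\<^sub>R s) \<bullet> s = t * (norm s)^2" using vs by (simp add: inner_add_left power2_norm_eq_inner)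
        hence "(v + t *\<^sub>R s) \<bullet> s \<noteq> 0" using t False by simp
        from dir[OF this]
        have "0 \<le> (v + t *\<^sub>R s) \<bullet> (G *v (v + t *\<^sub>R s)) + lam * (norm (v + t *\<^sub>R s))^2" .
        also have "\<dots> = v \<bullet> (G *v v) + lam * (norm v)^2 + t * B + t^2 * Qs"
          unfolding mv_expand norm_line_sq B_def Qs_def by (simp add: algebra_simps)
        finally have F: "0 \<le> v \<bullet> (G *v v) + lam * (norm v)^2 + t * B + t^2 * Qs" .
        have "t * B + t^2 * Qs \<le> (\<bar>B\<bar> + \<bar>Qs\<bar>) * t"
        proof -
          have "t * B \<le> t * \<bar>B\<bar>" using t by (intro mult_left_mono) auto
          moreover have "t^2 * Qs \<le> t * \<bar>Qs\<bar>"
          proof -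
            have "t^2 * Qs \<le> t^2 * \<bar>Qs\<bar>" by (intro mult_left_mono) auto
            also have "\<dots> \<le> t * \<bar>Qs\<bar>" using t by (intro mult_right_mono) (auto simp: power2_eq_square)
            finally show ?thesis .
          qed
          ultimately show ?thesis by (simp add: algebra_simps)
        qed
        thus "0 \<le> v \<bullet> (G *v v) + lam * (norm v)^2 + (\<bar>B\<bar> + \<bar>Qs\<bar>) * t" using F by linarith
      qed
      thus ?thesis by (simp add: lam_def)
    qed
  qed
qed

lemma mnorm_bound: "norm (A *v v) \<le> mnorm A * norm v"
  unfolding mnorm_def by (rule onorm[OF matrix_vector_mul_bounded_linear])

lemma mnorm_inner: "\<bar>u \<bullet> (A *v v)\<bar> \<le> mnorm A * norm u * norm v"
proof -
  have "\<bar>u \<bullet> (A *v v)\<bar> \<le> norm u * norm (A *v v)" by (rule Cauchy_Schwarz_ineq2)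
  also have "\<dots> \<le> norm u * (mnorm A * norm v)" by (intro mult_left_mono mnorm_bound) auto
  finally show ?thesis by (simp add: algebra_simps)
qed

lemma young1: "(a::real) \<ge> 0 \<Longrightarrow> r \<ge> 0 \<Longrightarrow> a^2 * r \<le> (2 * a^3 + r^3) / 3"
proof -
  assume "a \<ge> 0" "r \<ge> 0"
  have "0 \<le> (a - r)^2 * (2 * a + r)" using \<open>a \<ge> 0\<close> \<open>r \<ge> 0\<close> by simp
  also have "(a - r)^2 * (2 * a + r) = 2 * a^3 + r^3 - 3 * (a^2 * r)"
    by (simp add: power2_eq_square power3_eq_cube algebra_simps)
  finally show ?thesis by simp
qed

lemma young2: "(a::real) \<ge> 0 \<Longrightarrow> r \<ge> 0 \<Longrightarrow> a * r^2 \<le> (a^3 + 2 * r^3) / 3"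
  using young1[of r a] by (simp add: mult.commute)

lemma descent_step:
  fixes G :: "real^'m^'m" and Phi :: "real^'m \<Rightarrow> real"
  assumes min: "is_cubic_min g G \<eta> s" and eta: "\<eta> > 0"
    and T1: "Phi (x + s) \<le> Phi x + gr \<bullet> s + 1/2 * (s \<bullet> (Hx *v s)) + L/6 * norm s ^ 3"
    and e1: "norm (gr - g) \<le> \<beta> * (a^2 + \<epsilon>^2)"
    and e2: "mnorm (Hx - G) \<le> \<alpha> * (a + \<epsilon>)"
    and a0: "a \<ge> 0" and ep: "\<epsilon> > 0" and al: "\<alpha> > 0" and be: "\<beta> > 0"
  shows "Phi (x + s) + (1/(4*\<eta>) - L/6 - 2*\<beta>/3 - 2*\<alpha>/3) * norm s ^ 3
          \<le> Phi x + (2*\<beta>/3 + \<alpha>/6) * a^3 + (2*\<beta>/3 + \<alpha>/6) * \<epsilon>^3"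
proof -
  define r where "r = norm s"
  have r0: "r \<ge> 0" by (simp add: r_def)
  define lam where "lam = r / (2 * \<eta>)"
  have FO: "g \<bullet> s + s \<bullet> (G *v s) + lam * r^2 = 0"
    using cubic_first_order[OF min eta, of s] by (simp add: lam_def r_def power2_norm_eq_inner)
  have SO: "0 \<le> s \<bullet> (G *v s) + lam * r^2"
    using cubic_second_order[OF min eta, of s] by (simp add: lam_def r_def)
  have lr: "lam * r^2 = r^3 / (2 * \<eta>)" by (simp add: lam_def power2_eq_square power3_eq_cube)
  have m1: "gr \<bullet> s \<le> g \<bullet> s + \<beta> * (a^2 + \<epsilon>^2) * r"
  proof -
    have "(gr - g) \<bullet> s \<le> norm (gr - g) * r" unfolding r_def by (rule norm_cauchy_schwarz)
    also have "\<dots> \<le> \<beta> * (a^2 + \<epsilon>^2) * r" using e1 r0 by (intro mult_right_mono) auto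
    finally show ?thesis by (simp add: inner_diff_left)
  qed
  have m2: "s \<bullet> (Hx *v s) \<le> s \<bullet> (G *v s) + \<alpha> * (a + \<epsilon>) * r^2"
  proof -
    have "s \<bullet> ((Hx - G) *v s) \<le> mnorm (Hx - G) * r * r"
      using mnorm_inner[of s "Hx - G" s] by (simp add: r_def)
    also have "\<dots> \<le> \<alpha> * (a + \<epsilon>) * r * r" using e2 r0 by (intro mult_right_mono) auto
    finally show ?thesis by (simp add: matrix_vector_mult_diff_rdistrib inner_diff_right power2_eq_square)
  qed
  have y1: "a^2 * r \<le> (2 * a^3 + r^3) / 3" using young1 a0 r0 by blast
  have y2: "\<epsilon>^2 * r \<le> (2 * \<epsilon>^3 + r^3) / 3" using young1 ep r0 by simp
  have y3: "a * r^2 \<le> (a^3 + 2 * r^3) / 3" using young2 a0 r0 by blast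
  have y4: "\<epsilon> * r^2 \<le> (\<epsilon>^3 + 2 * r^3) / 3" using young2 ep r0 by simp
  have P1: "Phi (x + s) \<le> Phi x + g \<bullet> s + 1/2 * (s \<bullet> (G *v s)) + \<beta> * (a^2 * r) + \<beta> * (\<epsilon>^2 * r)
          + \<alpha>/2 * (a * r^2) + \<alpha>/2 * (\<epsilon> * r^2) + L/6 * r^3"
    using T1 m1 m2 unfolding r_def by (simp add: algebra_simps)
  have P2: "g \<bullet> s + 1/2 * (s \<bullet> (G *v s)) \<le> -(r^3 / (4 * \<eta>))"
    using FO SO lr eta by (simp add: field_simps)
  have "Phi (x + s) \<le> Phi x - r^3 / (4 * \<eta>) + \<beta> * (a^2 * r) + \<beta> * (\<epsilon>^2 * r)
          + \<alpha>/2 * (a * r^2) + \<alpha>/2 * (\<epsilon> * r^2) + L/6 * r^3" using P1 P2 by linarith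
  moreover have "\<beta> * (a^2 * r) \<le> 2*\<beta>/3 * a^3 + \<beta>/3 * r^3"
  proof -
    have "\<beta> * (a^2 * r) \<le> \<beta> * ((2 * a^3 + r^3) / 3)" using y1 be by (intro mult_left_mono) auto
    thus ?thesis by (simp add: field_simps)
  qed
  moreover have "\<beta> * (\<epsilon>^2 * r) \<le> 2*\<beta>/3 * \<epsilon>^3 + \<beta>/3 * r^3"
  proof -
    have "\<beta> * (\<epsilon>^2 * r) \<le> \<beta> * ((2 * \<epsilon>^3 + r^3) / 3)" using y2 be by (intro mult_left_mono) auto
    thus ?thesis by (simp add: field_simps)
  qed
  moreover have "\<alpha>/2 * (a * r^2) \<le> \<alpha>/6 * a^3 + \<alpha>/3 * r^3"
  proof -
    have "\<alpha>/2 * (a * r^2) \<le> \<alpha>/2 * ((a^3 + 2 * r^3) / 3)" using y3 al by (intro mult_left_mono) auto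
    thus ?thesis by (simp add: field_simps)
  qed
  moreover have "\<alpha>/2 * (\<epsilon> * r^2) \<le> \<alpha>/6 * \<epsilon>^3 + \<alpha>/3 * r^3"
  proof -
    have "\<alpha>/2 * (\<epsilon> * r^2) \<le> \<alpha>/2 * ((\<epsilon>^3 + 2 * r^3) / 3)" using y4 al by (intro mult_left_mono) auto
    thus ?thesis by (simp add: field_simps)
  qed
  moreover have "(1/(4*\<eta>) - L/6 - 2*\<beta>/3 - 2*\<alpha>/3) * r^3 = r^3 / (4 * \<eta>) - L/6 * r^3 - 2*\<beta>/3 * r^3 - 2*\<alpha>/3 * r^3"
    by (simp add: field_simps)
  moreover have "(2*\<beta>/3 + \<alpha>/6) * a^3 + (2*\<beta>/3 + \<alpha>/6) * \<epsilon>^3 = 2*\<beta>/3 * a^3 + \<alpha>/6 * a^3 + 2*\<beta>/3 * \<epsilon>^3 + \<alpha>/6 * \<epsilon>^3"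
    by (simp add: field_simps)
  ultimately show ?thesis unfolding r_def[symmetric] by linarith
qed

lemma final_grad:
  fixes G :: "real^'m^'m" and Hx :: "real^'m^'m"
  assumes min: "is_cubic_min g G \<eta> s" and eta: "\<eta> > 0"
    and T2: "norm (gr' - gr - Hx *v s) \<le> L/2 * (norm s)^2"
    and sym: "\<And>u v. u \<bullet> (Hx *v v) = v \<bullet> (Hx *v u)"
    and e1: "norm (gr - g) \<le> \<beta> * (a^2 + \<epsilon>^2)"
    and e2: "mnorm (Hx - G) \<le> \<alpha> * (a + \<epsilon>)"
    and a0: "a \<ge> 0" and aeps: "a \<le> \<epsilon>" and reps: "norm s \<le> \<epsilon>"
    and al: "\<alpha> > 0" and be: "\<beta> > 0" and L0: "L \<ge> 0" and ep: "\<epsilon> > 0"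
  shows "norm gr' \<le> (1 / (2 * \<eta>) + L + 2 * \<alpha> + 2 * \<beta>) * \<epsilon>^2"
proof -
  define r where "r = norm s"
  have r0: "r \<ge> 0" by (simp add: r_def)
  define lam where "lam = r / (2 * \<eta>)"
  define u where "u = gr'"
  define M where "M = mnorm (Hx - G)"
  have FO: "g \<bullet> u = - ((s \<bullet> (G *v u) + u \<bullet> (G *v s)) / 2) - lam * (s \<bullet> u)"
    using cubic_first_order[OF min eta, of u] by (simp add: lam_def r_def)
  define w1 where "w1 = gr' - gr - Hx *v s"
  have dec: "u = w1 + (gr - g) + Hx *v s + g" by (simp add: u_def w1_def)
  have "u \<bullet> u = u \<bullet> w1 + u \<bullet> (gr - g) + (u \<bullet> (Hx *v s) + g \<bullet> u)"
    by (subst (2) dec) (simp add: inner_add_right inner_diff_right inner_commute)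
  also have "u \<bullet> (Hx *v s) + g \<bullet> u = 1/2 * (u \<bullet> ((Hx - G) *v s)) + 1/2 * (s \<bullet> ((Hx - G) *v u)) - lam * (s \<bullet> u)"
    using FO sym[of u s] by (simp add: matrix_vector_mult_diff_rdistrib inner_diff_right field_simps)
  finally have uu: "u \<bullet> u = u \<bullet> w1 + u \<bullet> (gr - g) + 1/2 * (u \<bullet> ((Hx - G) *v s)) + 1/2 * (s \<bullet> ((Hx - G) *v u)) - lam * (s \<bullet> u)" by simp
  have b1: "u \<bullet> w1 \<le> norm u * (L/2 * r^2)"
  proof -
    have "u \<bullet> w1 \<le> norm u * norm w1" by (rule norm_cauchy_schwarz)
    also have "\<dots> \<le> norm u * (L/2 * r^2)" using T2 by (intro mult_left_mono) (auto simp: w1_def r_def)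
    finally show ?thesis .
  qed
  have b2: "u \<bullet> (gr - g) \<le> norm u * (\<beta> * (a^2 + \<epsilon>^2))"
  proof -
    have "u \<bullet> (gr - g) \<le> norm u * norm (gr - g)" by (rule norm_cauchy_schwarz)
    also have "\<dots> \<le> norm u * (\<beta> * (a^2 + \<epsilon>^2))" using e1 by (intro mult_left_mono) auto
    finally show ?thesis .
  qed
  have b3: "u \<bullet> ((Hx - G) *v s) \<le> norm u * (\<alpha> * (a + \<epsilon>) * r)"
  proof -
    have "u \<bullet> ((Hx - G) *v s) \<le> M * norm u * r" using mnorm_inner[of u "Hx - G" s] by (simp add: M_def r_def)
    also have "\<dots> \<le> \<alpha> * (a + \<epsilon>) * norm u * r" using e2 r0 by (intro mult_right_mono) (auto simp: M_def)
    finally show ?thesis by (simp add: algebra_simps)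
  qed
  have b4: "s \<bullet> ((Hx - G) *v u) \<le> norm u * (\<alpha> * (a + \<epsilon>) * r)"
  proof -
    have "s \<bullet> ((Hx - G) *v u) \<le> M * r * norm u" using mnorm_inner[of s "Hx - G" u] by (simp add: M_def r_def)
    also have "\<dots> \<le> \<alpha> * (a + \<epsilon>) * r * norm u" using e2 r0 by (intro mult_right_mono) (auto simp: M_def)
    finally show ?thesis by (simp add: algebra_simps)
  qed
  have b5: "- lam * (s \<bullet> u) \<le> norm u * (lam * r)"
  proof -
    have "- (s \<bullet> u) \<le> r * norm u" using norm_cauchy_schwarz[of "-s" u] by (simp add: r_def)
    hence "lam * (- (s \<bullet> u)) \<le> lam * (r * norm u)" using eta r0 by (intro mult_left_mono) (auto simp: lam_def)
    thus ?thesis by (simp add: algebra_simps)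
  qed
  define C where "C = L/2 * r^2 + \<beta> * (a^2 + \<epsilon>^2) + \<alpha> * (a + \<epsilon>) * r + lam * r"
  have "norm u ^ 2 \<le> norm u * C"
    using uu b1 b2 b3 b4 b5 unfolding C_def power2_norm_eq_inner by (simp add: algebra_simps)
  moreover have "C \<ge> 0" unfolding C_def lam_def using L0 be al a0 r0 eta \<open>\<epsilon> > 0\<close> \<open>a \<le> \<epsilon>\<close>
    by (intro add_nonneg_nonneg mult_nonneg_nonneg divide_nonneg_pos; simp)
  ultimately have nu: "norm u \<le> C"
  proof (cases "norm u = 0")
    case False
    hence "norm u > 0" by simp
    moreover have "norm u * norm u \<le> norm u * C" using \<open>norm u ^ 2 \<le> norm u * C\<close> by (simp add: power2_eq_square)
    ultimately show ?thesis by simp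
  qed (use \<open>C \<ge> 0\<close> in simp)
  have r2: "r^2 \<le> \<epsilon>^2" using reps r0 by (simp add: r_def power_mono)
  have a2: "a^2 \<le> \<epsilon>^2" using aeps a0 by (simp add: power_mono)
  have ar: "(a + \<epsilon>) * r \<le> 2 * \<epsilon>^2" using mult_mono[of "a + \<epsilon>" "2 * \<epsilon>" r \<epsilon>] aeps reps a0 r0
    by (simp add: r_def power2_eq_square)
  have k1: "L/2 * r^2 \<le> L/2 * \<epsilon>^2" using r2 L0 by (intro mult_left_mono) auto
  have k2: "\<beta> * (a^2 + \<epsilon>^2) \<le> \<beta> * (2 * \<epsilon>^2)" using a2 be by (intro mult_left_mono) auto
  have k3: "\<alpha> * ((a + \<epsilon>) * r) \<le> \<alpha> * (2 * \<epsilon>^2)" using ar al by (intro mult_left_mono) auto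
  have k4: "lam * r \<le> \<epsilon>^2 / (2 * \<eta>)"
  proof -
    have "lam * r = r^2 / (2 * \<eta>)" by (simp add: lam_def power2_eq_square)
    also have "\<dots> \<le> \<epsilon>^2 / (2 * \<eta>)" using r2 eta by (intro divide_right_mono) auto
    finally show ?thesis .
  qed
  have "C \<le> L/2 * \<epsilon>^2 + \<beta> * (2 * \<epsilon>^2) + \<alpha> * (2 * \<epsilon>^2) + \<epsilon>^2 / (2 * \<eta>)"
    unfolding C_def using k1 k2 k3 k4 by (simp add: mult.assoc)
  also have "\<dots> \<le> (1 / (2 * \<eta>) + L + 2 * \<alpha> + 2 * \<beta>) * \<epsilon>^2"
    using L0 by (simp add: field_simps)
  finally show ?thesis using nu by (simp add: u_def)
qed

lemma final_hess:
  fixes G :: "real^'m^'m" and Hx :: "real^'m^'m"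
  assumes min: "is_cubic_min g G \<eta> s" and eta: "\<eta> > 0"
    and T3: "norm ((Hx' - Hx) *v v) \<le> L * norm s * norm v"
    and e2: "mnorm (Hx - G) \<le> \<alpha> * (a + \<epsilon>)"
    and a0: "a \<ge> 0" and aeps: "a \<le> \<epsilon>" and reps: "norm s \<le> \<epsilon>"
    and al: "\<alpha> > 0" and L0: "L \<ge> 0"
  shows "- ((1 / (2 * \<eta>) + L + 2 * \<alpha>) * \<epsilon>) * norm v ^ 2 \<le> v \<bullet> (Hx' *v v)"
proof -
  have SO: "0 \<le> v \<bullet> (G *v v) + norm s / (2 * \<eta>) * (norm v)^2"
    by (rule cubic_second_order[OF min eta])
  have h1: "v \<bullet> ((Hx' - Hx) *v v) \<ge> - (L * norm s * norm v * norm v)"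
  proof -
    have "\<bar>v \<bullet> ((Hx' - Hx) *v v)\<bar> \<le> norm v * norm ((Hx' - Hx) *v v)" by (rule Cauchy_Schwarz_ineq2)
    also have "\<dots> \<le> norm v * (L * norm s * norm v)" using T3 by (intro mult_left_mono) auto
    finally show ?thesis by (simp add: algebra_simps)
  qed
  have h2: "v \<bullet> ((Hx - G) *v v) \<ge> - (\<alpha> * (a + \<epsilon>) * norm v * norm v)"
  proof -
    have "\<bar>v \<bullet> ((Hx - G) *v v)\<bar> \<le> mnorm (Hx - G) * norm v * norm v" by (rule mnorm_inner)
    also have "\<dots> \<le> \<alpha> * (a + \<epsilon>) * norm v * norm v" using e2 by (intro mult_right_mono) auto
    finally show ?thesis by (simp add: algebra_simps)
  qed
  have eq: "v \<bullet> (Hx' *v v) = v \<bullet> ((Hx' - Hx) *v v) + v \<bullet> ((Hx - G) *v v) + v \<bullet> (G *v v)"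
    by (simp add: matrix_vector_mult_diff_rdistrib inner_diff_right)
  have nv: "0 \<le> norm v * norm v" by simp
  have c1: "L * norm s * norm v * norm v \<le> L * \<epsilon> * (norm v * norm v)"
    using reps L0 nv by (simp add: mult.assoc mult_left_mono mult_right_mono)
  have c2: "\<alpha> * (a + \<epsilon>) * norm v * norm v \<le> \<alpha> * (2 * \<epsilon>) * (norm v * norm v)"
  proof -
    have "\<alpha> * (a + \<epsilon>) \<le> \<alpha> * (2 * \<epsilon>)" using aeps al by (intro mult_left_mono) auto
    from mult_right_mono[OF this nv] show ?thesis by (simp add: mult.assoc)
  qed
  have c3: "norm s / (2 * \<eta>) * (norm v)^2 \<le> \<epsilon> / (2 * \<eta>) * (norm v * norm v)"
    using reps eta nv by (simp add: power2_eq_square divide_right_mono mult_right_mono)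
  have "- ((1 / (2 * \<eta>) + L + 2 * \<alpha>) * \<epsilon>) * norm v ^ 2
     = - (\<epsilon> / (2 * \<eta>) * (norm v * norm v)) - L * \<epsilon> * (norm v * norm v) - \<alpha> * (2 * \<epsilon>) * (norm v * norm v)"
    by (simp add: field_simps power2_eq_square)
  thus ?thesis using eq h1 h2 SO c1 c2 c3 by linarith
qed

lemma potential:
  fixes P r :: "nat \<Rightarrow> real"
  assumes d0: "d \<ge> 0" and B0: "B \<ge> 0" and cc: "c \<ge> 2 * B + 3 * d" and e: "e > 0"
    and r0: "r 0 = e" and rnn: "\<And>t. r t \<ge> 0"
    and step: "\<And>t. t < K \<Longrightarrow> P (Suc t) + c * r (Suc t) ^ 3 \<le> P t + d * r t ^ 3 + d * e ^ 3"
    and big: "\<And>t. 1 \<le> t \<Longrightarrow> t < K \<Longrightarrow> e < max (r (t - 1)) (r t)"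
    and K1: "K \<ge> 1" and low: "Ps \<le> P K"
  shows "B * real K * e^3 \<le> P 0 - Ps + (B + 2 * d) * e^3"
proof -
  define E where "E = e^3"
  have E0: "E > 0" using e by (simp add: E_def)
  define V where "V t = P t + d * r t ^ 3" for t
  have stepV: "V (Suc t) \<le> V t + d * E - (c - d) * r (Suc t) ^ 3" if "t < K" for t
    using step[OF that] by (simp add: V_def E_def algebra_simps)
  have cd: "c - d \<ge> 0" using cc B0 d0 by linarith
  have claim: "k < K \<longrightarrow> V k \<le> V 0 - B * real k * E - (if e < r k then (B + d) * E else 0)" for k
  proof (induction k)
    case 0
    show ?case using r0 by simp
  next
    case (Suc k)
    show ?case
    proof
      assume k: "Suc k < K"
      hence IH: "V k \<le> V 0 - B * real k * E - (if e < r k then (B + d) * E else 0)" using Suc by simp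
      have sv: "V (Suc k) \<le> V k + d * E - (c - d) * r (Suc k) ^ 3" using stepV k by simp
      have bg: "e < max (r k) (r (Suc k))" using big[of "Suc k"] k by simp
      have nn: "(c - d) * r (Suc k) ^ 3 \<ge> 0" using cd rnn by simp
      have BE: "B * real (Suc k) * E = B * real k * E + B * E" by (simp add: algebra_simps)
      have BdE: "(B + d) * E \<ge> 0" using B0 d0 E0 by simp
      show "V (Suc k) \<le> V 0 - B * real (Suc k) * E - (if e < r (Suc k) then (B + d) * E else 0)"
      proof (cases "e < r (Suc k)")
        case True
        have "E < r (Suc k) ^ 3" unfolding E_def using True e by (intro power_strict_mono) auto
        hence "(c - d) * E \<le> (c - d) * r (Suc k) ^ 3" using cd by (intro mult_left_mono) auto
        moreover have "(c - d) * E \<ge> (2 * B + 2 * d) * E" using cc E0 by (intro mult_right_mono) auto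
        moreover have "V k \<le> V 0 - B * real k * E" using IH BdE by (auto split: if_splits)
        ultimately show ?thesis using True sv BE by (simp add: algebra_simps)
      next
        case False
        hence "e < r k" using bg by simp
        hence "V k \<le> V 0 - B * real k * E - (B + d) * E" using IH by simp
        thus ?thesis using False sv BE nn by (simp add: algebra_simps)
      qed
    qed
  qed
  have "K - 1 < K" using K1 by simp
  from claim[of "K - 1"] this
  have h0: "V (K - 1) \<le> V 0 - B * real (K - 1) * E - (if e < r (K - 1) then (B + d) * E else 0)" by simp
  have "(if e < r (K - 1) then (B + d) * E else 0) \<ge> 0" using B0 d0 E0 by simp
  hence h1: "V (K - 1) \<le> V 0 - B * real (K - 1) * E" using h0 by linarith
  have h2: "V K \<le> V (K - 1) + d * E"
  proof -
    have "V (Suc (K - 1)) \<le> V (K - 1) + d * E - (c - d) * r (Suc (K - 1)) ^ 3" by (rule stepV[OF \<open>K - 1 < K\<close>])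
    moreover have "Suc (K - 1) = K" using K1 by simp
    moreover have "(c - d) * r K ^ 3 \<ge> 0" using cd rnn by simp
    ultimately show ?thesis by simp
  qed
  have h3: "P K \<le> V K" using d0 rnn by (simp add: V_def)
  have h4: "V 0 = P 0 + d * E" using r0 by (simp add: V_def E_def)
  have h5: "B * real (K - 1) * E = B * real K * E - B * E" using K1 by (simp add: of_nat_diff algebra_simps)
  show ?thesis using h1 h2 h3 h4 h5 low unfolding E_def[symmetric] by (simp add: algebra_simps)
qed

lemma core:
  fixes Phi :: "real^'m \<Rightarrow> real" and gr :: "real^'m \<Rightarrow> real^'m" and Hs :: "real^'m \<Rightarrow> real^'m^'m"
    and x s gs :: "nat \<Rightarrow> real^'m" and Gs :: "nat \<Rightarrow> real^'m^'m"
  assumes T1: "\<And>x s. Phi (x + s) \<le> Phi x + gr x \<bullet> s + 1/2 * (s \<bullet> (Hs x *v s)) + L/6 * norm s ^ 3"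
    and T2: "\<And>x s. norm (gr (x + s) - gr x - Hs x *v s) \<le> L/2 * (norm s)^2"
    and T3: "\<And>x s v. norm ((Hs (x + s) - Hs x) *v v) \<le> L * norm s * norm v"
    and sym: "\<And>x u v. u \<bullet> (Hs x *v v) = v \<bullet> (Hs x *v u)"
    and low: "\<And>x. Ps \<le> Phi x"
    and L0: "L \<ge> 0" and al: "\<alpha> > 0" and be: "\<beta> > 0" and ep: "\<epsilon> > 0" and eta: "\<eta> > 0"
    and eta_le: "\<eta> \<le> 1 / (9 * L + 18 * \<alpha> + 28 * \<beta>)"
    and s0: "norm (s 0) = \<epsilon>"
    and it: "\<And>t. is_cubic_min (gs t) (Gs t) \<eta> (s (Suc t)) \<and> x (Suc t) = x t + s (Suc t)"
    and err: "\<And>t. enat t < stop_time s \<epsilon> \<Longrightarrow>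
        norm (gr (x t) - gs t) \<le> \<beta> * (norm (s t) ^ 2 + \<epsilon> ^ 2) \<and>
        mnorm (Hs (x t) - Gs t) \<le> \<alpha> * (norm (s t) + \<epsilon>)"
  shows "\<exists>k. stop_time s \<epsilon> = enat k \<and>
     real k \<le> (Phi (x 0) - Ps + (L + 3 * \<alpha> + 4 * \<beta>) * \<epsilon> ^ 3) / ((L + \<alpha> + \<beta>) * \<epsilon> ^ 3) \<and>
     norm (gr (x k)) \<le> (1 / (2 * \<eta>) + L + 2 * \<alpha> + 2 * \<beta>) * \<epsilon> ^ 2 \<and>
     (\<forall>v. - ((1 / (2 * \<eta>) + L + 2 * \<alpha>) * \<epsilon>) * norm v ^ 2 \<le> v \<bullet> (Hs (x k) *v v))"
proof -
  define c where "c = 1/(4*\<eta>) - L/6 - 2*\<beta>/3 - 2*\<alpha>/3"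
  define d where "d = 2*\<beta>/3 + \<alpha>/6"
  define B where "B = L + \<alpha> + \<beta>"
  define A where "A = L + 3 * \<alpha> + 4 * \<beta>"
  define Bd where "Bd = (Phi (x 0) - Ps + A * \<epsilon> ^ 3) / (B * \<epsilon> ^ 3)"
  have Dpos: "9 * L + 18 * \<alpha> + 28 * \<beta> > 0" using L0 al be by linarith
  have inv: "9 * L + 18 * \<alpha> + 28 * \<beta> \<le> 1 / \<eta>"
  proof -
    have "\<eta> * (9 * L + 18 * \<alpha> + 28 * \<beta>) \<le> 1" using eta_le Dpos by (simp add: le_divide_eq)
    thus ?thesis using eta by (simp add: le_divide_eq mult.commute)
  qed
  have cc: "c \<ge> 2 * B + 3 * d"
  proof -
    define q where "q = 1 / \<eta>"
    have "c = q / 4 - L/6 - 2*\<beta>/3 - 2*\<alpha>/3" by (simp add: c_def q_def)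
    moreover have "9 * L + 18 * \<alpha> + 28 * \<beta> \<le> q" using inv by (simp add: q_def)
    moreover have "2 * B + 3 * d = 2 * L + 2 * \<alpha> + 4 * \<beta> + \<alpha> / 2" by (simp add: B_def d_def)
    ultimately show ?thesis using L0 al be by linarith
  qed
  have d0: "d \<ge> 0" using al be by (simp add: d_def)
  have B0: "B > 0" using L0 al be by (simp add: B_def)
  have BA: "B + 2 * d \<le> A" using al be by (simp add: B_def d_def A_def)
  have E0: "\<epsilon> ^ 3 > 0" using ep by simp
  have general: "real K \<le> Bd"
    if K1: "K \<ge> 1" and errK: "\<And>t. t < K \<Longrightarrow> enat t < stop_time s \<epsilon>"
      and bigK: "\<And>t. 1 \<le> t \<Longrightarrow> t < K \<Longrightarrow> \<epsilon> < max (norm (s (t - 1))) (norm (s t))" for K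
  proof -
    have "B * real K * \<epsilon>^3 \<le> Phi (x 0) - Ps + (B + 2 * d) * \<epsilon>^3"
    proof (rule potential[where P = "\<lambda>t. Phi (x t)" and r = "\<lambda>t. norm (s t)" and c = c])
      fix t assume t: "t < K"
      have e: "norm (gr (x t) - gs t) \<le> \<beta> * (norm (s t) ^ 2 + \<epsilon> ^ 2)"
              "mnorm (Hs (x t) - Gs t) \<le> \<alpha> * (norm (s t) + \<epsilon>)" using err[OF errK[OF t]] by auto
      have "Phi (x t + s (Suc t)) + c * norm (s (Suc t)) ^ 3
          \<le> Phi (x t) + d * norm (s t) ^ 3 + d * \<epsilon> ^ 3"
        unfolding c_def d_def
        by (rule descent_step[OF conjunct1[OF it[of t]] eta T1 e(1) e(2) _ ep al be]) simp
      thus "Phi (x (Suc t)) + c * norm (s (Suc t)) ^ 3 \<le> Phi (x t) + d * norm (s t) ^ 3 + d * \<epsilon> ^ 3"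
        using it[of t] by simp
    qed (use d0 B0 cc ep s0 bigK K1 low in auto)
    hence "B * real K * \<epsilon>^3 \<le> Phi (x 0) - Ps + A * \<epsilon>^3"
      using BA E0 by (smt (verit) mult_right_mono)
    hence "real K * (B * \<epsilon>^3) \<le> Phi (x 0) - Ps + A * \<epsilon>^3" by (simp add: algebra_simps)
    thus ?thesis unfolding Bd_def using B0 E0 by (simp add: le_divide_eq)
  qed
  show ?thesis
  proof (cases "\<exists>t\<ge>1. max (norm (s (t - 1))) (norm (s t)) \<le> \<epsilon>")
    case False
    hence st: "stop_time s \<epsilon> = \<infinity>" by (simp add: stop_time_def)
    obtain K :: nat where K: "Bd < real K" using reals_Archimedean2 by blast
    have "real (K + 1) \<le> Bd"
      by (rule general) (use False st in \<open>auto simp: not_le less_max_iff_disj\<close>)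
    with K show ?thesis by simp
  next
    case True
    define k where "k = (LEAST t. 1 \<le> t \<and> max (norm (s (t - 1))) (norm (s t)) \<le> \<epsilon>)"
    have st: "stop_time s \<epsilon> = enat k" using True by (simp add: stop_time_def k_def)
    have kP: "1 \<le> k \<and> max (norm (s (k - 1))) (norm (s k)) \<le> \<epsilon>"
      unfolding k_def using True by (metis (mono_tags, lifting) LeastI)
    have notP: "\<not> (1 \<le> t \<and> max (norm (s (t - 1))) (norm (s t)) \<le> \<epsilon>)" if "t < k" for t
      using not_less_Least[OF that[unfolded k_def]] by blast
    have bound: "real k \<le> Bd"
    proof (rule general)
      show "1 \<le> k" using kP by simp
      show "enat t < stop_time s \<epsilon>" if "t < k" for t using that st by simp
      show "\<epsilon> < max (norm (s (t - 1))) (norm (s t))" if "1 \<le> t" "t < k" for t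
        using notP[OF that(2)] that(1) by (auto simp: not_le less_max_iff_disj)
    qed
    define j where "j = k - 1"
    have kj: "k = Suc j" using kP by (simp add: j_def)
    have ej: "enat j < stop_time s \<epsilon>" using st kj by simp
    have e: "norm (gr (x j) - gs j) \<le> \<beta> * (norm (s j) ^ 2 + \<epsilon> ^ 2)"
            "mnorm (Hs (x j) - Gs j) \<le> \<alpha> * (norm (s j) + \<epsilon>)" using err[OF ej] by auto
    have aj: "norm (s j) \<le> \<epsilon>" unfolding j_def using kP by simp
    have rk: "norm (s (Suc j)) \<le> \<epsilon>" unfolding kj[symmetric] using kP by simp
    have xk: "x k = x j + s (Suc j)" using it[of j] kj by simp
    have G: "norm (gr (x k)) \<le> (1 / (2 * \<eta>) + L + 2 * \<alpha> + 2 * \<beta>) * \<epsilon> ^ 2"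
      unfolding xk
      by (rule final_grad[OF conjunct1[OF it[of j]] eta T2 sym e(1) e(2) _ aj rk al be L0 ep]) simp
    have H: "- ((1 / (2 * \<eta>) + L + 2 * \<alpha>) * \<epsilon>) * norm v ^ 2 \<le> v \<bullet> (Hs (x k) *v v)" for v
      unfolding xk
      by (rule final_hess[OF conjunct1[OF it[of j]] eta T3 e(2) _ aj rk al L0]) simp
    show ?thesis using st bound G H unfolding Bd_def A_def B_def by blast
  qed
qed

lemma line_real:
  fixes F :: "'a::real_normed_vector \<Rightarrow> real"
  assumes "(F has_derivative D) (at (x + t *\<^sub>R s))" and "linear D"
  shows "((\<lambda>t. F (x + t *\<^sub>R s)) has_real_derivative D s) (at t)"
proof -
  have d1: "((\<lambda>t. x + t *\<^sub>R s) has_derivative (\<lambda>h. h *\<^sub>R s)) (at t)"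
    by (auto intro!: derivative_eq_intros)
  have "((\<lambda>t. F (x + t *\<^sub>R s)) has_derivative (\<lambda>h. D (h *\<^sub>R s))) (at t)"
    using has_derivative_compose[OF d1 assms(1)] by (simp add: o_def)
  moreover have "(\<lambda>h. D (h *\<^sub>R s)) = (*) (D s)"
    using linear_scale[OF assms(2)] by (auto simp: fun_eq_iff mult.commute)
  ultimately show ?thesis unfolding has_field_derivative_def by simp
qed

locale taylor =
  fixes Phi :: "real^'m \<Rightarrow> real" and gr :: "real^'m \<Rightarrow> real^'m" and Hs :: "real^'m \<Rightarrow> real^'m^'m"
    and L :: real
  assumes dPhi: "\<And>x. (Phi has_derivative (\<lambda>h. gr x \<bullet> h)) (at x)"
    and dgr: "\<And>x. (gr has_derivative (\<lambda>h. Hs x *v h)) (at x)"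
    and Lip: "\<And>x x' v. norm ((Hs x' - Hs x) *v v) \<le> L * norm (x' - x) * norm v"
    and L0: "L \<ge> 0"
begin

lemma dphi_line: "((\<lambda>t. Phi (x + t *\<^sub>R s)) has_real_derivative (gr (x + t *\<^sub>R s) \<bullet> s)) (at t)"
  by (rule line_real[OF dPhi]) (simp add: linear_iff inner_add_right)

lemma dgr_line: "((\<lambda>t. u \<bullet> gr (x + t *\<^sub>R s)) has_real_derivative (u \<bullet> (Hs (x + t *\<^sub>R s) *v s))) (at t)"
proof -
  have "((\<lambda>p. u \<bullet> gr p) has_derivative (\<lambda>h. u \<bullet> (Hs (x + t *\<^sub>R s) *v h))) (at (x + t *\<^sub>R s))"
    by (rule has_derivative_inner_right[OF dgr])
  moreover have "linear (\<lambda>h. u \<bullet> (Hs (x + t *\<^sub>R s) *v h))"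
    by (simp add: linear_iff inner_add_right matrix_vector_right_distrib matrix_vector_mult_scaleR)
  ultimately show ?thesis using line_real by blast
qed

lemma hess_diff_inner:
  assumes "t \<ge> 0"
  shows "\<bar>u \<bullet> ((Hs (x + t *\<^sub>R s) - Hs x) *v s)\<bar> \<le> L * t * norm s * norm s * norm u"
proof -
  have "\<bar>u \<bullet> ((Hs (x + t *\<^sub>R s) - Hs x) *v s)\<bar> \<le> norm u * norm ((Hs (x + t *\<^sub>R s) - Hs x) *v s)"
    by (rule Cauchy_Schwarz_ineq2)
  also have "\<dots> \<le> norm u * (L * norm (t *\<^sub>R s) * norm s)"
    using Lip[where x=x and x'="x + t *\<^sub>R s" and v=s] by (intro mult_left_mono) auto
  finally show ?thesis using assms by (simp add: algebra_simps)
qed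

lemma T1: "Phi (x + s) \<le> Phi x + gr x \<bullet> s + 1/2 * (s \<bullet> (Hs x *v s)) + L/6 * norm s ^ 3"
proof -
  define r where "r = norm s"
  define q0 where "q0 = s \<bullet> (Hs x *v s)"
  define chi where "chi t = gr (x + t *\<^sub>R s) \<bullet> s - gr x \<bullet> s - t * q0 - L * r^3 * t^2 / 2" for t
  define psi where "psi t = Phi (x + t *\<^sub>R s) - Phi x - t * (gr x \<bullet> s) - t^2 / 2 * q0 - L * r^3 * t^3 / 6" for t
  have dchi: "(chi has_real_derivative (s \<bullet> (Hs (x + t *\<^sub>R s) *v s) - q0 - L * r^3 * t)) (at t)" for t
  proof -
    have "((\<lambda>t. s \<bullet> gr (x + t *\<^sub>R s)) has_real_derivative (s \<bullet> (Hs (x + t *\<^sub>R s) *v s))) (at t)"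
      by (rule dgr_line)
    hence "((\<lambda>t. s \<bullet> gr (x + t *\<^sub>R s) - gr x \<bullet> s - t * q0 - L * r^3 * t^2 / 2) has_real_derivative
            (s \<bullet> (Hs (x + t *\<^sub>R s) *v s) - 0 - 1 * q0 - L * r^3 * (2 * t) / 2)) (at t)"
      by (intro derivative_eq_intros) auto
    thus ?thesis unfolding chi_def by (simp add: inner_commute mult.assoc)
  qed
  have dpsi: "(psi has_real_derivative chi t) (at t)" for t
  proof -
    have gen: "\<And>F D. (F has_real_derivative D) (at t) \<Longrightarrow> ((\<lambda>t. F t - Phi x - t * (gr x \<bullet> s) - t^2 / 2 * q0 - L * r^3 * t^3 / 6) has_real_derivative
          (D - 0 - 1 * (gr x \<bullet> s) - (2 * t) / 2 * q0 - L * r^3 * (3 * t^2) / 6)) (at t)"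
      by (intro derivative_eq_intros) auto
    have "((\<lambda>t. Phi (x + t *\<^sub>R s) - Phi x - t * (gr x \<bullet> s) - t^2 / 2 * q0 - L * r^3 * t^3 / 6) has_real_derivative
          (gr (x + t *\<^sub>R s) \<bullet> s - 0 - 1 * (gr x \<bullet> s) - (2 * t) / 2 * q0 - L * r^3 * (3 * t^2) / 6)) (at t)"
      by (rule gen[OF dphi_line])
    thus ?thesis unfolding psi_def chi_def by (simp add: algebra_simps)
  qed
  have chi_le: "chi t \<le> 0" if t: "t \<ge> 0" for t
  proof -
    have "chi t \<le> chi 0"
    proof (rule deriv_nonpos_imp_antimono[OF dchi])
      fix y assume y: "y \<in> {0..t}"
      have "s \<bullet> (Hs (x + y *\<^sub>R s) *v s) - q0 = s \<bullet> ((Hs (x + y *\<^sub>R s) - Hs x) *v s)"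
        by (simp add: q0_def matrix_vector_mult_diff_rdistrib inner_diff_right)
      also have "\<dots> \<le> L * y * r * r * r" using hess_diff_inner[of y s x s] y by (simp add: r_def)
      finally show "s \<bullet> (Hs (x + y *\<^sub>R s) *v s) - q0 - L * r^3 * y \<le> 0"
        by (simp add: power3_eq_cube algebra_simps)
    qed (use t in auto)
    thus ?thesis by (simp add: chi_def)
  qed
  have "psi 1 \<le> psi 0"
    by (rule deriv_nonpos_imp_antimono[OF dpsi]) (auto intro: chi_le)
  thus ?thesis by (simp add: psi_def r_def q0_def algebra_simps)
qed

lemma T2: "norm (gr (x + s) - gr x - Hs x *v s) \<le> L/2 * (norm s)^2"
proof -
  define r where "r = norm s"
  define w where "w = gr (x + s) - gr x - Hs x *v s"
  define u where "u = w"
  define th where "th t = u \<bullet> gr (x + t *\<^sub>R s) - u \<bullet> gr x - t * (u \<bullet> (Hs x *v s)) - L * r^2 * norm u * t^2 / 2" for t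
  have dth: "(th has_real_derivative (u \<bullet> (Hs (x + t *\<^sub>R s) *v s) - u \<bullet> (Hs x *v s) - L * r^2 * norm u * t)) (at t)" for t
  proof -
    have gen: "\<And>F D. (F has_real_derivative D) (at t) \<Longrightarrow> ((\<lambda>t. F t - u \<bullet> gr x - t * (u \<bullet> (Hs x *v s)) - L * r^2 * norm u * t^2 / 2) has_real_derivative
          (D - 0 - 1 * (u \<bullet> (Hs x *v s)) - L * r^2 * norm u * (2 * t) / 2)) (at t)"
      by (intro derivative_eq_intros) auto
    have "((\<lambda>t. u \<bullet> gr (x + t *\<^sub>R s) - u \<bullet> gr x - t * (u \<bullet> (Hs x *v s)) - L * r^2 * norm u * t^2 / 2) has_real_derivative
          (u \<bullet> (Hs (x + t *\<^sub>R s) *v s) - 0 - 1 * (u \<bullet> (Hs x *v s)) - L * r^2 * norm u * (2 * t) / 2)) (at t)"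
      by (rule gen[OF dgr_line])
    thus ?thesis unfolding th_def by (simp add: mult.assoc)
  qed
  have "th 1 \<le> th 0"
  proof (rule deriv_nonpos_imp_antimono[OF dth])
    fix y :: real assume y: "y \<in> {0..1}"
    have "u \<bullet> (Hs (x + y *\<^sub>R s) *v s) - u \<bullet> (Hs x *v s) = u \<bullet> ((Hs (x + y *\<^sub>R s) - Hs x) *v s)"
      by (simp add: matrix_vector_mult_diff_rdistrib inner_diff_right)
    also have "\<dots> \<le> L * y * r * r * norm u" using hess_diff_inner[of y u x s] y by (simp add: r_def)
    finally show "u \<bullet> (Hs (x + y *\<^sub>R s) *v s) - u \<bullet> (Hs x *v s) - L * r^2 * norm u * y \<le> 0"
      by (simp add: power2_eq_square algebra_simps)
  qed auto
  hence "u \<bullet> w \<le> L * r^2 * norm u / 2"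
    by (simp add: th_def w_def inner_diff_right)
  hence "norm w * norm w \<le> (L/2 * r^2) * norm w" by (simp add: u_def power2_norm_eq_inner[symmetric] power2_eq_square algebra_simps)
  hence "norm w \<le> L/2 * r^2 \<or> norm w = 0"
    by (cases "norm w = 0") (auto simp: mult_le_cancel_right)
  moreover have "0 \<le> L/2 * r^2" using L0 by simp
  ultimately show ?thesis unfolding w_def r_def by auto
qed

lemma T3: "norm ((Hs (x + s) - Hs x) *v v) \<le> L * norm s * norm v"
  using Lip[where x=x and x'="x + s" and v=v] by simp

lemma sym_approx:
  assumes s0: "s > 0"
  shows "\<bar>(Phi (x + s *\<^sub>R u + s *\<^sub>R v) - Phi (x + s *\<^sub>R v) - Phi (x + s *\<^sub>R u) + Phi x)
           - s^2 * (v \<bullet> (Hs x *v u))\<bar> \<le> s^3 * (L * (norm u * norm v ^ 2 + norm u ^ 2 * norm v))"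
proof -
  define psi where "psi t = Phi (x + s *\<^sub>R u + t *\<^sub>R v) - Phi (x + t *\<^sub>R v)" for t
  define dpsi where "dpsi t = gr (x + s *\<^sub>R u + t *\<^sub>R v) \<bullet> v - gr (x + t *\<^sub>R v) \<bullet> v" for t
  have D: "(psi has_real_derivative dpsi t) (at t)" for t
    unfolding psi_def dpsi_def by (intro DERIV_diff dphi_line)
  obtain \<xi> where xi: "0 < \<xi>" "\<xi> < s" and mvt: "psi s - psi 0 = (s - 0) * dpsi \<xi>"
    using MVT2[OF s0 D] by blast
  define p where "p = x + \<xi> *\<^sub>R v"
  have pe: "x + s *\<^sub>R u + \<xi> *\<^sub>R v = p + s *\<^sub>R u" by (simp add: p_def algebra_simps)
  define w where "w = gr (p + s *\<^sub>R u) - gr p - Hs p *v (s *\<^sub>R u)"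
  have wb: "norm w \<le> L/2 * (s * norm u)^2" using T2[of p "s *\<^sub>R u"] s0 by (simp add: w_def)
  have dp: "dpsi \<xi> = s * (v \<bullet> (Hs x *v u)) + s * (v \<bullet> ((Hs p - Hs x) *v u)) + v \<bullet> w"
    unfolding dpsi_def pe w_def
    by (simp add: p_def[symmetric] inner_diff_left inner_diff_right inner_commute matrix_vector_mult_scaleR
        matrix_vector_mult_diff_rdistrib algebra_simps)
  have b1: "\<bar>v \<bullet> ((Hs p - Hs x) *v u)\<bar> \<le> L * s * norm v * norm v * norm u"
  proof -
    have "\<bar>v \<bullet> ((Hs p - Hs x) *v u)\<bar> \<le> norm v * norm ((Hs p - Hs x) *v u)" by (rule Cauchy_Schwarz_ineq2)
    also have "\<dots> \<le> norm v * (L * norm (p - x) * norm u)" using Lip[where x=x and x'=p and v=u]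
      by (intro mult_left_mono) auto
    also have "norm (p - x) = \<xi> * norm v" using xi by (simp add: p_def)
    also have "norm v * (L * (\<xi> * norm v) * norm u) \<le> norm v * (L * (s * norm v) * norm u)"
      using xi L0 by (intro mult_left_mono mult_right_mono) auto
    finally show ?thesis by (simp add: algebra_simps)
  qed
  have b2: "\<bar>v \<bullet> w\<bar> \<le> norm v * (L/2 * (s * norm u)^2)"
  proof -
    have "\<bar>v \<bullet> w\<bar> \<le> norm v * norm w" by (rule Cauchy_Schwarz_ineq2)
    also have "\<dots> \<le> norm v * (L/2 * (s * norm u)^2)" using wb by (intro mult_left_mono) auto
    finally show ?thesis .
  qed
  have "psi s - psi 0 = Phi (x + s *\<^sub>R u + s *\<^sub>R v) - Phi (x + s *\<^sub>R v) - Phi (x + s *\<^sub>R u) + Phi x"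
    by (simp add: psi_def)
  hence eq: "(Phi (x + s *\<^sub>R u + s *\<^sub>R v) - Phi (x + s *\<^sub>R v) - Phi (x + s *\<^sub>R u) + Phi x)
           - s^2 * (v \<bullet> (Hs x *v u)) = s * (s * (v \<bullet> ((Hs p - Hs x) *v u)) + v \<bullet> w)"
    using mvt dp by (simp add: power2_eq_square algebra_simps)
  have "\<bar>s * (v \<bullet> ((Hs p - Hs x) *v u)) + v \<bullet> w\<bar> \<le> s * (L * s * norm v * norm v * norm u) + norm v * (L/2 * (s * norm u)^2)"
  proof -
    have "\<bar>s * (v \<bullet> ((Hs p - Hs x) *v u)) + v \<bullet> w\<bar> \<le> \<bar>s * (v \<bullet> ((Hs p - Hs x) *v u))\<bar> + \<bar>v \<bullet> w\<bar>"
      by (rule abs_triangle_ineq)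
    moreover have "\<bar>s * (v \<bullet> ((Hs p - Hs x) *v u))\<bar> = s * \<bar>v \<bullet> ((Hs p - Hs x) *v u)\<bar>" using s0 by (simp add: abs_mult)
    moreover have "s * \<bar>v \<bullet> ((Hs p - Hs x) *v u)\<bar> \<le> s * (L * s * norm v * norm v * norm u)"
      using b1 s0 by (intro mult_left_mono) auto
    ultimately show ?thesis using b2 by linarith
  qed
  also have "\<dots> \<le> s^2 * (L * (norm u * norm v ^ 2 + norm u ^ 2 * norm v))"
  proof -
    have "0 \<le> s^2 * L * norm u ^ 2 * norm v" using L0 s0 by simp
    thus ?thesis by (simp add: power2_eq_square algebra_simps)
  qed
  finally have "\<bar>s * (s * (v \<bullet> ((Hs p - Hs x) *v u)) + v \<bullet> w)\<bar> \<le> s * (s^2 * (L * (norm u * norm v ^ 2 + norm u ^ 2 * norm v)))"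
    using s0 by (simp add: abs_mult mult_left_mono)
  thus ?thesis unfolding eq by (simp add: power2_eq_square power3_eq_cube algebra_simps)
qed

lemma hess_sym: "u \<bullet> (Hs x *v v) = v \<bullet> (Hs x *v u)"
proof -
  define K where "K = L * (norm u * norm v ^ 2 + norm u ^ 2 * norm v)"
  have K0: "K \<ge> 0" using L0 by (simp add: K_def)
  have "\<bar>v \<bullet> (Hs x *v u) - u \<bullet> (Hs x *v v)\<bar> \<le> 2 * s * K" if s0: "s > 0" for s
  proof -
    have e1: "x + s *\<^sub>R v + s *\<^sub>R u = x + s *\<^sub>R u + s *\<^sub>R v" by (simp add: algebra_simps)
    note a1 = sym_approx[OF s0, of x u v]
    note a2 = sym_approx[OF s0, of x v u]
    have "\<bar>s^2 * (v \<bullet> (Hs x *v u)) - s^2 * (u \<bullet> (Hs x *v v))\<bar> \<le> s^3 * K + s^3 * (L * (norm v * norm u ^ 2 + norm v ^ 2 * norm u))"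
      using a1 a2 unfolding e1 K_def by linarith
    also have "\<dots> = s^2 * (2 * s * K)" by (simp add: K_def power2_eq_square power3_eq_cube algebra_simps)
    finally have "s^2 * \<bar>v \<bullet> (Hs x *v u) - u \<bullet> (Hs x *v v)\<bar> \<le> s^2 * (2 * s * K)"
      by (simp add: abs_mult right_diff_distrib[symmetric])
    thus ?thesis using s0 by simp
  qed
  hence "\<bar>v \<bullet> (Hs x *v u) - u \<bullet> (Hs x *v v)\<bar> = 0"
  proof -
    assume H: "\<And>s. s > 0 \<Longrightarrow> \<bar>v \<bullet> (Hs x *v u) - u \<bullet> (Hs x *v v)\<bar> \<le> 2 * s * K"
    show ?thesis
    proof (rule ccontr)
      define a where "a = \<bar>v \<bullet> (Hs x *v u) - u \<bullet> (Hs x *v v)\<bar>"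
      assume "\<bar>v \<bullet> (Hs x *v u) - u \<bullet> (Hs x *v v)\<bar> \<noteq> 0"
      hence a0: "a > 0" by (simp add: a_def)
      define s where "s = a / (4 * (K + 1))"
      have s0: "s > 0" using a0 K0 by (simp add: s_def)
      have "2 * s * K < a"
      proof -
        have "2 * s * K = a * (2 * K) / (4 * (K + 1))" by (simp add: s_def)
        also have "\<dots> < a" using a0 K0 by (simp add: field_simps add_pos_nonneg)
        finally show ?thesis .
      qed
      with H[OF s0] show False by (simp add: a_def)
    qed
  qed
  thus ?thesis by simp
qed

end

lemma deriv_lower:
  fixes \<phi> :: "real \<Rightarrow> real"
  assumes D: "(\<phi> has_real_derivative D) (at 0)"
    and ineq: "\<And>t. 0 < t \<Longrightarrow> t < 1 \<Longrightarrow> t * (a - b * t) \<le> \<phi> t - \<phi> 0"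
  shows "a \<le> D"
proof -
  have lim: "((\<lambda>t. (\<phi> t - \<phi> 0) / t) \<longlongrightarrow> D) (at_right 0)"
  proof -
    have "((\<lambda>t. (\<phi> t - \<phi> 0) / (t - 0)) \<longlongrightarrow> D) (at 0)"
      using D by (simp add: has_field_derivative_iff)
    hence "((\<lambda>t. (\<phi> t - \<phi> 0) / (t - 0)) \<longlongrightarrow> D) (at_right 0)"
      by (rule filterlim_mono) (auto simp: at_le)
    thus ?thesis by simp
  qed
  have lim2: "((\<lambda>t. a - b * t) \<longlongrightarrow> a - b * 0) (at_right 0)"
    by (intro tendsto_intros)
  have ev: "\<forall>\<^sub>F t in at_right 0. a - b * t \<le> (\<phi> t - \<phi> 0) / t"
    unfolding eventually_at_right_field
  proof (intro exI[of _ 1] conjI allI impI)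
    fix t :: real assume t: "0 < t" "t < 1"
    show "a - b * t \<le> (\<phi> t - \<phi> 0) / t" using ineq[OF t] t by (simp add: pos_le_divide_eq mult.commute)
  qed simp
  have "a - b * 0 \<le> D"
    by (rule tendsto_le[OF _ lim lim2 ev]) simp
  thus ?thesis by simp
qed

lemma deriv_bound_lip:
  fixes F :: "'a::real_normed_vector \<Rightarrow> 'b::real_normed_vector"
  assumes D: "(F has_derivative F') (at z)" and lip: "\<And>z'. norm (F z' - F z) \<le> L * norm (z' - z)"
  shows "norm (F' w) \<le> L * norm w"
proof (cases "w = 0")
  case True
  have "linear F'" using D has_derivative_linear by blast
  thus ?thesis using True by (simp add: linear_0)
next
  case False
  have bl: "bounded_linear F'" using D has_derivative_bounded_linear by blast
  have "norm (F' w) \<le> L * norm w + e" if e: "e > 0" for e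
  proof -
    define e' where "e' = e / norm w"
    have e'0: "e' > 0" using e False by (simp add: e'_def)
    obtain d where d: "d > 0" and hd: "\<And>y. norm (y - z) < d \<Longrightarrow> norm (F y - F z - F' (y - z)) \<le> e' * norm (y - z)"
      using D e'0 unfolding has_derivative_at_alt by blast
    define t where "t = d / (2 * norm w)"
    have t0: "t > 0" using d False by (simp add: t_def)
    have ntw: "norm (t *\<^sub>R w) = d / 2" using False d t0 by (simp add: t_def)
    have "norm (F (z + t *\<^sub>R w) - F z - F' (t *\<^sub>R w)) \<le> e' * norm (t *\<^sub>R w)"
      using hd[of "z + t *\<^sub>R w"] ntw d by simp
    moreover have "F' (t *\<^sub>R w) = t *\<^sub>R F' w" using linear_scale[OF bounded_linear.linear[OF bl]] by simp
    moreover have "norm (F (z + t *\<^sub>R w) - F z) \<le> L * norm (t *\<^sub>R w)" using lip[of "z + t *\<^sub>R w"] by simp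
    ultimately have "norm (t *\<^sub>R F' w) \<le> L * norm (t *\<^sub>R w) + e' * norm (t *\<^sub>R w)"
    proof -
      assume a1: "norm (F (z + t *\<^sub>R w) - F z - F' (t *\<^sub>R w)) \<le> e' * norm (t *\<^sub>R w)"
        and a2: "F' (t *\<^sub>R w) = t *\<^sub>R F' w" and a3: "norm (F (z + t *\<^sub>R w) - F z) \<le> L * norm (t *\<^sub>R w)"
      have "t *\<^sub>R F' w = (F (z + t *\<^sub>R w) - F z) - (F (z + t *\<^sub>R w) - F z - F' (t *\<^sub>R w))"
        using a2 by simp
      hence "norm (t *\<^sub>R F' w) \<le> norm (F (z + t *\<^sub>R w) - F z) + norm (F (z + t *\<^sub>R w) - F z - F' (t *\<^sub>R w))"
        by (metis norm_triangle_ineq4)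
      thus ?thesis using a1 a3 by linarith
    qed
    hence "t * norm (F' w) \<le> t * (L * norm w + e' * norm w)" using t0 by (simp add: algebra_simps)
    hence "norm (F' w) \<le> L * norm w + e' * norm w" using t0 by simp
    thus ?thesis using False by (simp add: e'_def)
  qed
  thus ?thesis by (rule field_le_epsilon)
qed

locale sa =
  fixes f :: "(real^'m) \<times> (real^'n) \<Rightarrow> real"
    and g1 :: "(real^'m) \<times> (real^'n) \<Rightarrow> real^'m" and g2 :: "(real^'m) \<times> (real^'n) \<Rightarrow> real^'n"
    and H11 :: "(real^'m) \<times> (real^'n) \<Rightarrow> real^'m^'m" and H12 :: "(real^'m) \<times> (real^'n) \<Rightarrow> real^'n^'m"
    and H21 :: "(real^'m) \<times> (real^'n) \<Rightarrow> real^'m^'n" and H22 :: "(real^'m) \<times> (real^'n) \<Rightarrow> real^'n^'n"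
    and L1 L2 \<mu> :: real
  assumes SA: "standing_assumption f g1 g2 H11 H12 H21 H22 L1 L2 \<mu>"
begin

lemma fder: "(f has_derivative (\<lambda>p. g1 z \<bullet> fst p + g2 z \<bullet> snd p)) (at z)"
proof -
  have "(f has_derivative (\<lambda>(h, k). g1 z \<bullet> h + g2 z \<bullet> k)) (at z)"
    using SA unfolding standing_assumption_def C2_data_def by blast
  thus ?thesis by (simp add: case_prod_unfold)
qed

lemma gder: "((\<lambda>w. (g1 w, g2 w)) has_derivative
   (\<lambda>p. (H11 z *v fst p + H12 z *v snd p, H21 z *v fst p + H22 z *v snd p))) (at z)"
proof -
  have "((\<lambda>w. (g1 w, g2 w)) has_derivative
            (\<lambda>(h, k). (H11 z *v h + H12 z *v k, H21 z *v h + H22 z *v k))) (at z)"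
    using SA unfolding standing_assumption_def C2_data_def by blast
  thus ?thesis by (simp add: case_prod_unfold)
qed

lemma g1der: "(g1 has_derivative (\<lambda>p. H11 z *v fst p + H12 z *v snd p)) (at z)"
  using has_derivative_fst[OF gder[of z]] by simp

lemma g2der: "(g2 has_derivative (\<lambda>p. H21 z *v fst p + H22 z *v snd p)) (at z)"
  using has_derivative_snd[OF gder[of z]] by simp

lemma lip: "norm ((g1 z, g2 z) - (g1 z', g2 z')) \<le> L1 * norm (z - z')"
  using SA unfolding standing_assumption_def by blast

lemma mu: "\<mu> > 0"
  using SA unfolding standing_assumption_def by blast

lemma sc: "strongly_concave \<mu> (\<lambda>y. f (x, y))"
  using SA unfolding standing_assumption_def by blast

lemma hlip:
  "mnorm (H11 z - H11 z') \<le> L2 * norm (z - z')"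
  "mnorm (H12 z - H12 z') \<le> L2 * norm (z - z')"
  "mnorm (H21 z - H21 z') \<le> L2 * norm (z - z')"
  "mnorm (H22 z - H22 z') \<le> L2 * norm (z - z')"
  using SA unfolding standing_assumption_def by blast+

lemma bdd: "bdd_below (range (Phi f))"
  using SA unfolding standing_assumption_def by (elim conjE)

lemma L1_nonneg: "L1 \<ge> 0"
proof -
  define z :: "(real^'m) \<times> (real^'n)" where "z = (axis undefined 1, 0)"
  have "norm (z - 0) = 1" by (simp add: z_def)
  moreover have h: "norm ((g1 z, g2 z) - (g1 0, g2 0)) \<le> L1 * norm (z - 0)" by (rule lip)
  ultimately show ?thesis by (metis mult.right_neutral norm_ge_zero order_trans)
qed

lemma L2_nonneg: "L2 \<ge> 0"
proof -
  define z :: "(real^'m) \<times> (real^'n)" where "z = (axis undefined 1, 0)"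
  have "norm (z - 0) = 1" by (simp add: z_def)
  moreover have "0 \<le> mnorm (H11 z - H11 0)" unfolding mnorm_def by (rule onorm_pos_le) simp
  ultimately show ?thesis using hlip(1)[of z 0] by simp
qed

lemma fline: "((\<lambda>t. f (x, y + t *\<^sub>R w)) has_real_derivative (g2 (x, y + t *\<^sub>R w) \<bullet> w)) (at t)"
proof -
  have "((\<lambda>t. f ((x, y) + t *\<^sub>R (0, w))) has_real_derivative
         (\<lambda>p. g1 ((x, y) + t *\<^sub>R (0, w)) \<bullet> fst p + g2 ((x, y) + t *\<^sub>R (0, w)) \<bullet> snd p) (0, w)) (at t)"
    by (rule line_real[OF fder]) (simp add: linear_iff inner_add_right algebra_simps)
  thus ?thesis by simp
qed

lemma g2line: "((\<lambda>t. v \<bullet> g2 (x, y + t *\<^sub>R w)) has_real_derivative (v \<bullet> (H22 (x, y + t *\<^sub>R w) *v w))) (at t)"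
proof -
  have d: "((\<lambda>p. v \<bullet> g2 p) has_derivative (\<lambda>p. v \<bullet> (H21 ((x, y) + t *\<^sub>R (0, w)) *v fst p + H22 ((x, y) + t *\<^sub>R (0, w)) *v snd p)))
      (at ((x, y) + t *\<^sub>R (0, w)))"
    by (rule has_derivative_inner_right[OF g2der])
  have "((\<lambda>t. v \<bullet> g2 ((x, y) + t *\<^sub>R (0, w))) has_real_derivative
         (\<lambda>p. v \<bullet> (H21 ((x, y) + t *\<^sub>R (0, w)) *v fst p + H22 ((x, y) + t *\<^sub>R (0, w)) *v snd p)) (0, w)) (at t)"
    by (rule line_real[OF d]) (simp add: linear_iff inner_add_right matrix_vector_right_distrib matrix_vector_mult_scaleR algebra_simps)
  thus ?thesis by simp
qed

lemma conc: "f (x, y') \<le> f (x, y) + g2 (x, y) \<bullet> (y' - y) - \<mu> / 2 * (norm (y' - y))^2"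
proof -
  define N where "N = (norm (y' - y))^2"
  define \<phi> where "\<phi> t = f (x, y + t *\<^sub>R (y' - y))" for t
  have D: "(\<phi> has_real_derivative (g2 (x, y) \<bullet> (y' - y))) (at 0)"
    using fline[where x=x and y=y and w="y' - y" and t=0] unfolding \<phi>_def by simp
  have "f (x, y') - f (x, y) + \<mu> / 2 * N \<le> g2 (x, y) \<bullet> (y' - y)"
  proof (rule deriv_lower[OF D, of _ "\<mu> / 2 * N"])
    fix t :: real assume t: "0 < t" "t < 1"
    have "t * f (x, y') + (1 - t) * f (x, y) + \<mu> / 2 * t * (1 - t) * N \<le> f (x, t *\<^sub>R y' + (1 - t) *\<^sub>R y)"
      using sc[of x] t unfolding strongly_concave_def N_def by auto
    moreover have "t *\<^sub>R y' + (1 - t) *\<^sub>R y = y + t *\<^sub>R (y' - y)" by (simp add: algebra_simps)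
    ultimately have "t * f (x, y') + (1 - t) * f (x, y) + \<mu> / 2 * t * (1 - t) * N \<le> \<phi> t" by (simp add: \<phi>_def)
    moreover have "\<phi> 0 = f (x, y)" by (simp add: \<phi>_def)
    moreover have "t * (f (x, y') - f (x, y) + \<mu> / 2 * N - \<mu> / 2 * N * t)
        = t * f (x, y') + (1 - t) * f (x, y) + \<mu> / 2 * t * (1 - t) * N - f (x, y)"
      by (simp add: field_simps)
    ultimately show "t * (f (x, y') - f (x, y) + \<mu> / 2 * N - \<mu> / 2 * N * t) \<le> \<phi> t - \<phi> 0"
      by linarith
  qed
  thus ?thesis by (simp add: N_def)
qed

lemma mono: "(g2 (x, y') - g2 (x, y)) \<bullet> (y' - y) \<le> - \<mu> * (norm (y' - y))^2"
proof -
  have a: "f (x, y') \<le> f (x, y) + g2 (x, y) \<bullet> (y' - y) - \<mu> / 2 * (norm (y' - y))^2" by (rule conc)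
  have b: "f (x, y) \<le> f (x, y') + g2 (x, y') \<bullet> (y - y') - \<mu> / 2 * (norm (y - y'))^2" by (rule conc)
  have "norm (y - y') = norm (y' - y)" by (rule norm_minus_commute)
  moreover have "g2 (x, y') \<bullet> (y - y') = - (g2 (x, y') \<bullet> (y' - y))" by (simp add: inner_diff_right)
  ultimately show ?thesis using a b by (simp add: inner_diff_left)
qed

lemma H22neg: "v \<bullet> (H22 z *v v) \<le> - \<mu> * (norm v)^2"
proof -
  obtain x y where z: "z = (x, y)" by (cases z)
  define \<phi> where "\<phi> t = - (v \<bullet> g2 (x, y + t *\<^sub>R v))" for t
  have D: "(\<phi> has_real_derivative (- (v \<bullet> (H22 (x, y) *v v)))) (at 0)"
    unfolding \<phi>_def using DERIV_minus[OF g2line[of v x y v 0]] by simp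
  have "\<mu> * (norm v)^2 \<le> - (v \<bullet> (H22 (x, y) *v v))"
  proof (rule deriv_lower[OF D, of _ 0])
    fix t :: real assume t: "0 < t" "t < 1"
    have "(g2 (x, y + t *\<^sub>R v) - g2 (x, y)) \<bullet> (y + t *\<^sub>R v - y) \<le> - \<mu> * (norm (y + t *\<^sub>R v - y))^2"
      by (rule mono)
    hence "t * ((g2 (x, y + t *\<^sub>R v) - g2 (x, y)) \<bullet> v) \<le> t * (- \<mu> * t * (norm v)^2)"
      using t by (simp add: power_mult_distrib power2_eq_square algebra_simps)
    hence "(g2 (x, y + t *\<^sub>R v) - g2 (x, y)) \<bullet> v \<le> - \<mu> * t * (norm v)^2"
      by (rule mult_left_le_imp_le) (use t in simp)
    thus "t * (\<mu> * (norm v)^2 - 0 * t) \<le> \<phi> t - \<phi> 0"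
      by (simp add: \<phi>_def inner_diff_left inner_commute algebra_simps)
  qed
  thus ?thesis using z by simp
qed

lemma H22_lower: "\<mu> * norm v \<le> norm (H22 z *v v)"
proof (cases "v = 0")
  case True thus ?thesis by simp
next
  case False
  have "\<mu> * (norm v)^2 \<le> - (v \<bullet> (H22 z *v v))" using H22neg[of v z] by simp
  also have "\<dots> \<le> norm v * norm (H22 z *v v)"
    using Cauchy_Schwarz_ineq2[of v "H22 z *v v"] by linarith
  finally have "norm v * (\<mu> * norm v) \<le> norm v * norm (H22 z *v v)" by (simp add: power2_eq_square algebra_simps)
  thus ?thesis using False by simp
qed

end

context sa begin

lemma f_cont: "continuous_on UNIV (\<lambda>y. f (x, y))"
proof -
  have "isCont f z" for z using fder[of z] has_derivative_continuous by blast
  hence c: "continuous_on UNIV f" by (simp add: continuous_at_imp_continuous_on)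
  show ?thesis by (rule continuous_on_compose2[OF c]) (auto intro!: continuous_intros)
qed

lemma exists_max: "\<exists>y. \<forall>y'. f (x, y') \<le> f (x, y)"
proof -
  define S where "S = {y. f (x, 0) \<le> f (x, y)}"
  define R where "R = 2 * norm (g2 (x, 0)) / \<mu>"
  have sub: "S \<subseteq> cball 0 R"
  proof
    fix y assume "y \<in> S"
    hence fy: "f (x, 0) \<le> f (x, y)" by (simp add: S_def)
    have "f (x, y) \<le> f (x, 0) + g2 (x, 0) \<bullet> (y - 0) - \<mu> / 2 * (norm (y - 0))^2" by (rule conc)
    with fy have "\<mu> / 2 * (norm y)^2 \<le> g2 (x, 0) \<bullet> y" by simp
    also have "\<dots> \<le> norm (g2 (x, 0)) * norm y" by (rule norm_cauchy_schwarz)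
    finally have h: "\<mu> / 2 * (norm y)^2 \<le> norm (g2 (x, 0)) * norm y" .
    have "norm y \<le> R"
    proof (cases "norm y = 0")
      case True thus ?thesis using mu by (simp add: R_def)
    next
      case False
      hence "norm y * (\<mu> / 2 * norm y) \<le> norm y * norm (g2 (x, 0))"
        using h by (simp add: power2_eq_square algebra_simps)
      hence "\<mu> / 2 * norm y \<le> norm (g2 (x, 0))" using False by simp
      thus ?thesis using mu by (simp add: R_def field_simps)
    qed
    thus "y \<in> cball 0 R" by simp
  qed
  have cl: "closed S" unfolding S_def
    by (rule closed_Collect_le) (auto intro: f_cont continuous_on_const)
  have "compact S" using sub cl by (metis bounded_cball bounded_subset compact_eq_bounded_closed)
  moreover have "S \<noteq> {}" by (auto simp: S_def)
  moreover have "continuous_on S (\<lambda>y. f (x, y))" using f_cont continuous_on_subset by blast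
  ultimately obtain y where yS: "y \<in> S" and ym: "\<forall>y'\<in>S. f (x, y') \<le> f (x, y)"
    using continuous_attains_sup by blast
  have "f (x, y') \<le> f (x, y)" for y'
  proof (cases "y' \<in> S")
    case True thus ?thesis using ym by blast
  next
    case False thus ?thesis using yS by (auto simp: S_def)
  qed
  thus ?thesis by blast
qed

lemma crit: assumes "\<forall>y'. f (x, y') \<le> f (x, y)" shows "g2 (x, y) = 0"
proof -
  have D: "((\<lambda>t. f (x, y + t *\<^sub>R g2 (x, y))) has_real_derivative (g2 (x, y) \<bullet> g2 (x, y))) (at 0)"
    using fline[where x=x and y=y and w="g2 (x, y)" and t=0] by simp
  have "\<forall>t. \<bar>0 - t\<bar> < 1 \<longrightarrow> f (x, y + t *\<^sub>R g2 (x, y)) \<le> f (x, y + 0 *\<^sub>R g2 (x, y))"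
    using assms by simp
  from DERIV_local_max[OF D zero_less_one this] show ?thesis by simp
qed

definition ystar :: "real^'m \<Rightarrow> real^'n" where
  "ystar x = (SOME y. g2 (x, y) = 0)"

lemma ystar_crit: "g2 (x, ystar x) = 0"
proof -
  obtain y where "\<forall>y'. f (x, y') \<le> f (x, y)" using exists_max by blast
  hence "g2 (x, y) = 0" by (rule crit)
  thus ?thesis unfolding ystar_def by (rule someI)
qed

lemma ystar_max: "f (x, y) \<le> f (x, ystar x)"
proof -
  have "f (x, y) \<le> f (x, ystar x) + g2 (x, ystar x) \<bullet> (y - ystar x) - \<mu> / 2 * (norm (y - ystar x))^2"
    by (rule conc)
  moreover have "0 \<le> \<mu> / 2 * (norm (y - ystar x))^2" using mu by simp
  ultimately show ?thesis using ystar_crit[of x] by simp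
qed

lemma Phi_eq: "Phi f x = f (x, ystar x)"
  unfolding Phi_def by (rule cSup_eq_maximum) (auto intro: ystar_max)

lemma g2_xdiff: "norm (g2 (x', y) - g2 (x, y)) \<le> L1 * norm (x' - x)"
proof -
  have "norm (g2 (x', y) - g2 (x, y)) \<le> norm ((g1 (x', y), g2 (x', y)) - (g1 (x, y), g2 (x, y)))"
    using norm_snd_le[of "g2 (x', y) - g2 (x, y)" "g1 (x', y) - g1 (x, y)"] by simp
  also have "\<dots> \<le> L1 * norm ((x', y) - (x, y))" by (rule lip)
  also have "norm ((x', y) - (x, y)) = norm (x' - x)" by (simp add: norm_Pair)
  finally show ?thesis .
qed

lemma ystar_lip: "norm (ystar x' - ystar x) \<le> L1 / \<mu> * norm (x' - x)"
proof -
  define N where "N = norm (ystar x' - ystar x)"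
  have "(g2 (x', ystar x') - g2 (x', ystar x)) \<bullet> (ystar x' - ystar x) \<le> - \<mu> * N^2"
    unfolding N_def by (rule mono)
  hence "\<mu> * N^2 \<le> (g2 (x', ystar x) - g2 (x, ystar x)) \<bullet> (ystar x' - ystar x)"
    using ystar_crit[of x'] ystar_crit[of x] by (simp add: inner_diff_left)
  also have "\<dots> \<le> norm (g2 (x', ystar x) - g2 (x, ystar x)) * N" unfolding N_def by (rule norm_cauchy_schwarz)
  also have "\<dots> \<le> L1 * norm (x' - x) * N" using g2_xdiff by (intro mult_right_mono) (auto simp: N_def)
  finally have h: "\<mu> * N^2 \<le> L1 * norm (x' - x) * N" .
  have "\<mu> * N \<le> L1 * norm (x' - x)"
  proof (cases "N = 0")
    case True thus ?thesis using L1_nonneg by simp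
  next
    case False
    hence "N > 0" by (simp add: N_def)
    thus ?thesis using h by (simp add: power2_eq_square algebra_simps)
  qed
  thus ?thesis using mu by (simp add: N_def field_simps)
qed

definition P :: "(real^'m) \<times> (real^'n) \<Rightarrow> real^'n^'n" where
  "P z = matrix_inv (H22 z)"

lemma H22_inv: "H22 z ** P z = mat 1 \<and> P z ** H22 z = mat 1"
proof -
  have "inj ((*v) (H22 z))"
  proof (rule injI)
    fix a b assume "H22 z *v a = H22 z *v b"
    hence "H22 z *v (a - b) = 0" by (simp add: matrix_vector_mult_diff_distrib)
    hence "\<mu> * norm (a - b) \<le> 0" using H22_lower[of "a - b" z] by simp
    thus "a = b" using mu by (simp add: mult_le_0_iff)
  qed
  hence "\<exists>B. B ** H22 z = mat 1" by (simp add: matrix_left_invertible_injective)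
  hence "invertible (H22 z)" by (simp add: invertible_left_inverse)
  hence "\<exists>A'. H22 z ** A' = mat 1 \<and> A' ** H22 z = mat 1" by (simp add: invertible_def)
  thus ?thesis unfolding P_def matrix_inv_def by (rule someI_ex)
qed

lemma HP: "H22 z *v (P z *v w) = w"
  using H22_inv[of z] by (simp add: matrix_vector_mul_assoc)

lemma PH: "P z *v (H22 z *v v) = v"
  using H22_inv[of z] by (simp add: matrix_vector_mul_assoc)

lemma P_bound: "norm (P z *v w) \<le> norm w / \<mu>"
proof -
  have "\<mu> * norm (P z *v w) \<le> norm w" using H22_lower[of "P z *v w" z] by (simp add: HP)
  thus ?thesis using mu by (simp add: field_simps)
qed

lemma Flip: "norm ((g1 z', g2 z') - (g1 z, g2 z)) \<le> L1 * norm (z' - z)"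
  by (rule lip)

lemma H21_bound: "norm (H21 z *v h) \<le> L1 * norm h"
proof -
  have "norm ((H11 z *v fst (h, 0::real^'n) + H12 z *v snd (h, 0::real^'n), H21 z *v fst (h, 0::real^'n) + H22 z *v snd (h, 0::real^'n)))
        \<le> L1 * norm (h, 0::real^'n)"
    by (rule deriv_bound_lip[OF gder Flip])
  hence "norm ((H11 z *v h, H21 z *v h)) \<le> L1 * norm h" by (simp add: norm_Pair)
  thus ?thesis using norm_snd_le[of "H21 z *v h" "H11 z *v h"] by linarith
qed

lemma H12_bound: "norm (H12 z *v k) \<le> L1 * norm k"
proof -
  have "norm ((H11 z *v fst (0::real^'m, k) + H12 z *v snd (0::real^'m, k), H21 z *v fst (0::real^'m, k) + H22 z *v snd (0::real^'m, k)))
        \<le> L1 * norm (0::real^'m, k)"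
    by (rule deriv_bound_lip[OF gder Flip])
  hence "norm ((H12 z *v k, H22 z *v k)) \<le> L1 * norm k" by (simp add: norm_Pair)
  thus ?thesis using norm_fst_le[of "H12 z *v k" "H22 z *v k"] by linarith
qed

end

lemma mvneg: "(- A) *v x = - (A *v (x :: real^'a))"
  by (simp add: matrix_vector_mult_def vec_eq_iff sum_negf)

context sa begin

definition zm :: "real^'m \<Rightarrow> (real^'m) \<times> (real^'n)" where
  "zm x = (x, ystar x)"

definition M :: "real^'m \<Rightarrow> real^'m^'n" where
  "M x = - (P (zm x) ** H21 (zm x))"

lemma zm_diff: "norm (zm x' - zm x) \<le> (1 + L1 / \<mu>) * norm (x' - x)"
proof -
  have "norm (zm x' - zm x) = norm (x' - x, ystar x' - ystar x)" by (simp add: zm_def)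
  also have "\<dots> \<le> norm (x' - x) + norm (ystar x' - ystar x)" by (rule norm_Pair_le)
  also have "\<dots> \<le> norm (x' - x) + L1 / \<mu> * norm (x' - x)" using ystar_lip by simp
  finally show ?thesis by (simp add: algebra_simps)
qed

lemma ystar_deriv: "(ystar has_derivative (\<lambda>h. M x *v h)) (at x)"
  unfolding has_derivative_at_alt
proof (intro conjI allI impI)
  show "bounded_linear ((*v) (M x))" by simp
  fix e :: real assume e: "e > 0"
  define c where "c = 1 + L1 / \<mu>"
  have c1: "c \<ge> 1" using L1_nonneg mu by (simp add: c_def)
  define e' where "e' = e * \<mu> / c"
  have e'0: "e' > 0" using e mu c1 by (simp add: e'_def)
  define z where "z = zm x"
  obtain d' where d'0: "d' > 0" and hd: "\<And>w. norm (w - z) < d' \<Longrightarrow>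
      norm (g2 w - g2 z - (H21 z *v fst (w - z) + H22 z *v snd (w - z))) \<le> e' * norm (w - z)"
    using g2der[of z] e'0 unfolding has_derivative_at_alt by blast
  define d where "d = d' / c"
  have d0: "d > 0" using d'0 c1 by (simp add: d_def)
  show "\<exists>d>0. \<forall>y. norm (y - x) < d \<longrightarrow> norm (ystar y - ystar x - M x *v (y - x)) \<le> e * norm (y - x)"
  proof (intro exI[of _ d] conjI allI impI d0)
    fix x' assume x': "norm (x' - x) < d"
    define h where "h = x' - x"
    define dy where "dy = ystar x' - ystar x"
    have wz: "norm (zm x' - z) \<le> c * norm h" using zm_diff by (simp add: z_def c_def h_def)
    have "c * norm h < d'" using x' c1 by (simp add: d_def h_def pos_less_divide_eq mult.commute)
    hence "norm (zm x' - z) < d'" using wz by linarith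
    from hd[OF this]
    have "norm (g2 (zm x') - g2 z - (H21 z *v h + H22 z *v dy)) \<le> e' * norm (zm x' - z)"
      by (simp add: z_def zm_def h_def dy_def)
    moreover have "g2 (zm x') - g2 z - (H21 z *v h + H22 z *v dy) = - (H21 z *v h + H22 z *v dy)"
      using ystar_crit[of x'] ystar_crit[of x] by (simp add: z_def zm_def)
    ultimately have "norm (H21 z *v h + H22 z *v dy) \<le> e' * norm (zm x' - z)"
      by (metis norm_minus_cancel)
    also have "\<dots> \<le> e' * (c * norm h)" using wz e'0 by (intro mult_left_mono) auto
    also have "\<dots> = e * \<mu> * norm h" using c1 by (simp add: e'_def)
    finally have n1: "norm (H21 z *v h + H22 z *v dy) \<le> e * \<mu> * norm h" .
    have "dy - M x *v h = P z *v (H21 z *v h + H22 z *v dy)"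
      by (simp add: M_def z_def[symmetric] matrix_vector_mul_assoc[symmetric] matrix_vector_right_distrib PH
          mvneg)
    hence "norm (dy - M x *v h) \<le> norm (H21 z *v h + H22 z *v dy) / \<mu>" using P_bound by simp
    also have "\<dots> \<le> e * \<mu> * norm h / \<mu>" using n1 mu by (intro divide_right_mono) auto
    also have "\<dots> = e * norm h" using mu by simp
    finally show "norm (ystar x' - ystar x - M x *v (x' - x)) \<le> e * norm (x' - x)"
      by (simp add: dy_def h_def)
  qed
qed

lemma zm_deriv: "(zm has_derivative (\<lambda>h. (h, M x *v h))) (at x)"
  unfolding zm_def[abs_def] by (intro has_derivative_Pair has_derivative_ident ystar_deriv)

lemma Phi_fun: "Phi f = (\<lambda>x. f (zm x))"
  by (auto simp: fun_eq_iff Phi_eq zm_def)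

lemma Phi_deriv: "(Phi f has_derivative (\<lambda>h. g1 (zm x) \<bullet> h)) (at x)"
proof -
  have "((\<lambda>x. f (zm x)) has_derivative (\<lambda>h. g1 (zm x) \<bullet> fst (h, M x *v h) + g2 (zm x) \<bullet> snd (h, M x *v h))) (at x)"
    using has_derivative_compose[OF zm_deriv fder] by (simp add: o_def)
  moreover have "g2 (zm x) = 0" by (simp add: zm_def ystar_crit)
  ultimately show ?thesis unfolding Phi_fun by simp
qed

lemma vgrad_eq: "vgrad (Phi f) x = g1 (zm x)"
proof -
  have "frechet_derivative (Phi f) (at x) = (\<lambda>h. g1 (zm x) \<bullet> h)"
    using frechet_derivative_at[OF Phi_deriv] by simp
  thus ?thesis unfolding vgrad_def by (simp add: inner_axis vec_eq_iff)
qed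

lemma vgrad_fun: "vgrad (Phi f) = (\<lambda>x. g1 (zm x))"
  by (auto simp: fun_eq_iff vgrad_eq)

definition SG :: "real^'m \<Rightarrow> real^'m^'m" where
  "SG x = H11 (zm x) + H12 (zm x) ** M x"

lemma gr_deriv: "(vgrad (Phi f) has_derivative (\<lambda>h. SG x *v h)) (at x)"
proof -
  have "((\<lambda>x. g1 (zm x)) has_derivative (\<lambda>h. H11 (zm x) *v fst (h, M x *v h) + H12 (zm x) *v snd (h, M x *v h))) (at x)"
    using has_derivative_compose[OF zm_deriv g1der] by (simp add: o_def)
  moreover have "(\<lambda>h. H11 (zm x) *v fst (h, M x *v h) + H12 (zm x) *v snd (h, M x *v h)) = (\<lambda>h. SG x *v h)"
    by (simp add: SG_def fun_eq_iff matrix_vector_mult_add_rdistrib matrix_vector_mul_assoc)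
  ultimately show ?thesis unfolding vgrad_fun by simp
qed

lemma hess_eq: "hess (Phi f) x = SG x"
proof -
  have "frechet_derivative (vgrad (Phi f)) (at x) = (\<lambda>h. SG x *v h)"
    using frechet_derivative_at[OF gr_deriv] by simp
  thus ?thesis unfolding hess_def by simp
qed

end

lemma mvneg2: "(A :: real^'a^'b) *v (- x) = - (A *v x)"
  by (simp add: matrix_vector_mult_def vec_eq_iff sum_negf)

context sa begin

lemma Hd11: "norm ((H11 z' - H11 z) *v u) \<le> L2 * norm (z' - z) * norm u"
  using mnorm_bound[of "H11 z' - H11 z" u] hlip(1)[of z' z] by (meson mult_right_mono norm_ge_zero order_trans)
lemma Hd12: "norm ((H12 z' - H12 z) *v u) \<le> L2 * norm (z' - z) * norm u"
  using mnorm_bound[of "H12 z' - H12 z" u] hlip(2)[of z' z] by (meson mult_right_mono norm_ge_zero order_trans)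
lemma Hd21: "norm ((H21 z' - H21 z) *v u) \<le> L2 * norm (z' - z) * norm u"
  using mnorm_bound[of "H21 z' - H21 z" u] hlip(3)[of z' z] by (meson mult_right_mono norm_ge_zero order_trans)
lemma Hd22: "norm ((H22 z - H22 z') *v u) \<le> L2 * norm (z' - z) * norm u"
  using mnorm_bound[of "H22 z - H22 z'" u] hlip(4)[of z z'] norm_minus_commute[of z z']
  by (metis mult_right_mono norm_ge_zero order_trans)

lemma SG_apply: "SG x *v v = H11 (zm x) *v v - H12 (zm x) *v (P (zm x) *v (H21 (zm x) *v v))"
  by (simp add: SG_def M_def matrix_vector_mult_add_rdistrib matrix_vector_mul_assoc[symmetric] mvneg mvneg2)

lemma SGz_lip:
  "norm ((H11 z' *v v - H12 z' *v (P z' *v (H21 z' *v v))) - (H11 z *v v - H12 z *v (P z *v (H21 z *v v))))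
     \<le> L2 * (1 + L1 / \<mu>)^2 * norm (z' - z) * norm v"
proof -
  define \<kappa> where "\<kappa> = L1 / \<mu>"
  have k0: "\<kappa> \<ge> 0" using L1_nonneg mu by (simp add: \<kappa>_def)
  define \<delta> where "\<delta> = norm (z' - z)"
  have d0: "\<delta> \<ge> 0" by (simp add: \<delta>_def)
  define nv where "nv = norm v"
  define a where "a = H21 z' *v v"
  define b where "b = H21 z *v v"
  define p' where "p' = P z' *v a"
  have na: "norm a \<le> L1 * nv" unfolding a_def nv_def by (rule H21_bound)
  have nab: "norm (a - b) \<le> L2 * \<delta> * nv"
    using Hd21[of z' z v] by (simp add: a_def b_def \<delta>_def nv_def matrix_vector_mult_diff_rdistrib)
  have np: "norm p' \<le> \<kappa> * nv"
  proof -
    have "norm p' \<le> norm a / \<mu>" unfolding p'_def by (rule P_bound)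
    also have "\<dots> \<le> L1 * nv / \<mu>" using na mu by (intro divide_right_mono) auto
    finally show ?thesis by (simp add: \<kappa>_def)
  qed
  have e1: "P z *v (H22 z *v p') = p'" by (rule PH)
  have e2: "H22 z' *v p' = a" unfolding p'_def by (rule HP)
  have ident: "(H11 z' *v v - H12 z' *v (P z' *v (H21 z' *v v))) - (H11 z *v v - H12 z *v (P z *v (H21 z *v v)))
     = (H11 z' - H11 z) *v v - ((H12 z' - H12 z) *v p' + H12 z *v (P z *v ((H22 z - H22 z') *v p' + (a - b))))"
    using e1 e2
    by (simp add: a_def[symmetric] b_def[symmetric] p'_def[symmetric] matrix_vector_mult_diff_rdistrib
        matrix_vector_mult_diff_distrib matrix_vector_right_distrib algebra_simps)
  have t1: "norm ((H11 z' - H11 z) *v v) \<le> L2 * \<delta> * nv" using Hd11 by (simp add: \<delta>_def nv_def)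
  have t2: "norm ((H12 z' - H12 z) *v p') \<le> L2 * \<delta> * (\<kappa> * nv)"
  proof -
    have "norm ((H12 z' - H12 z) *v p') \<le> L2 * \<delta> * norm p'" using Hd12 by (simp add: \<delta>_def)
    also have "\<dots> \<le> L2 * \<delta> * (\<kappa> * nv)" using np L2_nonneg d0 by (intro mult_left_mono) auto
    finally show ?thesis .
  qed
  have t3: "norm ((H22 z - H22 z') *v p' + (a - b)) \<le> L2 * \<delta> * (\<kappa> * nv) + L2 * \<delta> * nv"
  proof -
    have "norm ((H22 z - H22 z') *v p') \<le> L2 * \<delta> * norm p'" using Hd22 by (simp add: \<delta>_def)
    also have "\<dots> \<le> L2 * \<delta> * (\<kappa> * nv)" using np L2_nonneg d0 by (intro mult_left_mono) auto
    finally show ?thesis using nab norm_triangle_ineq[of "(H22 z - H22 z') *v p'" "a - b"] by linarith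
  qed
  have t4: "norm (H12 z *v (P z *v ((H22 z - H22 z') *v p' + (a - b)))) \<le> \<kappa> * (L2 * \<delta> * (\<kappa> * nv) + L2 * \<delta> * nv)"
  proof -
    have "norm (H12 z *v (P z *v ((H22 z - H22 z') *v p' + (a - b)))) \<le> L1 * norm (P z *v ((H22 z - H22 z') *v p' + (a - b)))"
      by (rule H12_bound)
    also have "\<dots> \<le> L1 * (norm ((H22 z - H22 z') *v p' + (a - b)) / \<mu>)"
      using L1_nonneg P_bound by (intro mult_left_mono) auto
    also have "\<dots> = \<kappa> * norm ((H22 z - H22 z') *v p' + (a - b))" by (simp add: \<kappa>_def)
    also have "\<dots> \<le> \<kappa> * (L2 * \<delta> * (\<kappa> * nv) + L2 * \<delta> * nv)" using t3 k0 by (intro mult_left_mono) auto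
    finally show ?thesis .
  qed
  have "norm ((H11 z' *v v - H12 z' *v (P z' *v (H21 z' *v v))) - (H11 z *v v - H12 z *v (P z *v (H21 z *v v))))
     \<le> norm ((H11 z' - H11 z) *v v) + (norm ((H12 z' - H12 z) *v p') + norm (H12 z *v (P z *v ((H22 z - H22 z') *v p' + (a - b)))))"
    unfolding ident
  proof -
    define A where "A = (H11 z' - H11 z) *v v"
    define B where "B = (H12 z' - H12 z) *v p'"
    define C where "C = H12 z *v (P z *v ((H22 z - H22 z') *v p' + (a - b)))"
    have "norm (A - (B + C)) \<le> norm A + norm (B + C)" by (rule norm_triangle_ineq4)
    moreover have "norm (B + C) \<le> norm B + norm C" by (rule norm_triangle_ineq)
    ultimately show "norm (A - (B + C)) \<le> norm A + (norm B + norm C)" by linarith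
  qed
  also have "\<dots> \<le> L2 * \<delta> * nv + (L2 * \<delta> * (\<kappa> * nv) + \<kappa> * (L2 * \<delta> * (\<kappa> * nv) + L2 * \<delta> * nv))"
    using t1 t2 t4 by linarith
  also have "\<dots> = L2 * (1 + \<kappa>)^2 * \<delta> * nv" by (simp add: power2_eq_square algebra_simps)
  finally show ?thesis by (simp add: \<kappa>_def \<delta>_def nv_def)
qed

lemma SG_lip: "norm ((SG x' - SG x) *v v) \<le> L2 * (1 + L1 / \<mu>)^3 * norm (x' - x) * norm v"
proof -
  define k where "k = 1 + L1 / \<mu>"
  have k: "k \<ge> 1" using L1_nonneg mu by (simp add: k_def)
  have "norm ((SG x' - SG x) *v v) \<le> L2 * k^2 * norm (zm x' - zm x) * norm v"
    using SGz_lip[of "zm x'" v "zm x"] by (simp add: matrix_vector_mult_diff_rdistrib SG_apply k_def)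
  also have "\<dots> \<le> L2 * k^2 * (k * norm (x' - x)) * norm v"
    using zm_diff[of x' x] L2_nonneg k by (intro mult_right_mono mult_left_mono) (auto simp: k_def)
  also have "\<dots> = L2 * k^3 * norm (x' - x) * norm v" by (simp add: power2_eq_square power3_eq_cube)
  finally show ?thesis by (simp add: k_def)
qed

lemma is_taylor: "taylor (Phi f) (vgrad (Phi f)) (hess (Phi f)) (L2 * (1 + L1 / \<mu>)^3)"
proof
  show "(Phi f has_derivative (\<lambda>h. vgrad (Phi f) x \<bullet> h)) (at x)" for x
    using Phi_deriv by (simp add: vgrad_eq)
  show "(vgrad (Phi f) has_derivative (\<lambda>h. hess (Phi f) x *v h)) (at x)" for x
    using gr_deriv by (simp add: hess_eq)
  show "norm ((hess (Phi f) x' - hess (Phi f) x) *v v) \<le> L2 * (1 + L1 / \<mu>)^3 * norm (x' - x) * norm v" for x x' v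
    using SG_lip by (simp add: hess_eq)
  show "0 \<le> L2 * (1 + L1 / \<mu>)^3" using L2_nonneg L1_nonneg mu by simp
qed

end

theorem lemma5:
  fixes f :: "(real^'m) \<times> (real^'n) \<Rightarrow> real"
    and g1 :: "(real^'m) \<times> (real^'n) \<Rightarrow> real^'m" and g2 :: "(real^'m) \<times> (real^'n) \<Rightarrow> real^'n"
    and H11 :: "(real^'m) \<times> (real^'n) \<Rightarrow> real^'m^'m" and H12 :: "(real^'m) \<times> (real^'n) \<Rightarrow> real^'n^'m"
    and H21 :: "(real^'m) \<times> (real^'n) \<Rightarrow> real^'m^'n" and H22 :: "(real^'m) \<times> (real^'n) \<Rightarrow> real^'n^'n"
    and L1 L2 \<mu> \<alpha> \<beta> \<epsilon>' \<eta>x :: real and x0 :: "real^'m" and T :: nat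
    and Nf :: nat and fi :: "nat \<Rightarrow> (real^'m) \<times> (real^'n) \<Rightarrow> real"
    and gi1 :: "nat \<Rightarrow> (real^'m) \<times> (real^'n) \<Rightarrow> real^'m" and gi2 :: "nat \<Rightarrow> (real^'m) \<times> (real^'n) \<Rightarrow> real^'n"
    and Hi11 :: "nat \<Rightarrow> (real^'m) \<times> (real^'n) \<Rightarrow> real^'m^'m" and Hi12 :: "nat \<Rightarrow> (real^'m) \<times> (real^'n) \<Rightarrow> real^'n^'m"
    and Hi21 :: "nat \<Rightarrow> (real^'m) \<times> (real^'n) \<Rightarrow> real^'m^'n" and Hi22 :: "nat \<Rightarrow> (real^'m) \<times> (real^'n) \<Rightarrow> real^'n^'n"
  assumes SA: "standing_assumption f g1 g2 H11 H12 H21 H22 L1 L2 \<mu>"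
    and alpha: "\<alpha> > 0" and beta: "\<beta> > 0" and eps: "\<epsilon>' > 0" and etax: "\<eta>x > 0"
    and etax_le: "\<eta>x \<le> 1 / (9 * (L2 * (1 + L1 / \<mu>) ^ 3) + 18 * \<alpha> + 28 * \<beta>)"
    and T_ge: "(Phi f x0 - (INF x. Phi f x) + (L2 * (1 + L1 / \<mu>) ^ 3 + 3 * \<alpha> + 4 * \<beta>) * \<epsilon>' ^ 3)
                 / ((L2 * (1 + L1 / \<mu>) ^ 3 + \<alpha> + \<beta>) * \<epsilon>' ^ 3) \<le> real T"
  shows
   "(\<forall>\<eta>y N x y s. \<eta>y > 0 \<and> x 0 = x0 \<and> cubic_gda g1 g2 H11 H12 H21 H22 \<eta>x \<eta>y \<epsilon>' N x y s \<and>
       (\<forall>t. enat t < stop_time s \<epsilon>' \<longrightarrow>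
          norm (vgrad (Phi f) (x t) - g1 (x t, y (Suc t))) \<le> \<beta> * (norm (s t) ^ 2 + \<epsilon>' ^ 2) \<and>
          mnorm (hess (Phi f) (x t) -
                 schurG (H11 (x t, y (Suc t))) (H12 (x t, y (Suc t)))
                        (H21 (x t, y (Suc t))) (H22 (x t, y (Suc t)))) \<le> \<alpha> * (norm (s t) + \<epsilon>'))
     \<longrightarrow> (\<exists>k. stop_time s \<epsilon>' = enat k \<and>
            real k \<le> (Phi f x0 - (INF x. Phi f x) + (L2 * (1 + L1 / \<mu>) ^ 3 + 3 * \<alpha> + 4 * \<beta>) * \<epsilon>' ^ 3)
                       / ((L2 * (1 + L1 / \<mu>) ^ 3 + \<alpha> + \<beta>) * \<epsilon>' ^ 3) \<and>
            (Phi f x0 - (INF x. Phi f x) + (L2 * (1 + L1 / \<mu>) ^ 3 + 3 * \<alpha> + 4 * \<beta>) * \<epsilon>' ^ 3)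
                       / ((L2 * (1 + L1 / \<mu>) ^ 3 + \<alpha> + \<beta>) * \<epsilon>' ^ 3) \<le> real T \<and>
            norm (vgrad (Phi f) (x k)) \<le> (1 / (2 * \<eta>x) + L2 * (1 + L1 / \<mu>) ^ 3 + 2 * \<alpha> + 2 * \<beta>) * \<epsilon>' ^ 2 \<and>
            (\<forall>v. - ((1 / (2 * \<eta>x) + L2 * (1 + L1 / \<mu>) ^ 3 + 2 * \<alpha>) * \<epsilon>') * norm v ^ 2
                   \<le> v \<bullet> (hess (Phi f) (x k) *v v))))
    \<and>
    ((Nf \<ge> 1 \<and> (\<forall>i<Nf. C2_data (fi i) (gi1 i) (gi2 i) (Hi11 i) (Hi12 i) (Hi21 i) (Hi22 i) \<and>
                         (\<forall>x. strongly_concave \<mu> (\<lambda>y. fi i (x, y)))) \<and>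
      (\<forall>z. f z = (\<Sum>i<Nf. fi i z) / real Nf))
     \<longrightarrow> (\<forall>N \<xi> B1 B11 B12 B21 B22 x y s.
           x 0 = x0 \<and>
           scubic_gda Nf gi1 gi2 Hi11 Hi12 Hi21 Hi22 \<mu> \<eta>x \<epsilon>' N \<xi> B1 B11 B12 B21 B22 x y s \<and>
           (\<forall>t. enat t < stop_time s \<epsilon>' \<longrightarrow>
              norm (vgrad (Phi f) (x t) - mb_avg (B1 t) (\<lambda>i. gi1 i (x t, y (Suc t))))
                \<le> \<beta> * (norm (s t) ^ 2 + \<epsilon>' ^ 2) \<and>
              mnorm (hess (Phi f) (x t) -
                     schurG (mb_avg (B11 t) (\<lambda>i. Hi11 i (x t, y (Suc t))))
                            (mb_avg (B12 t) (\<lambda>i. Hi12 i (x t, y (Suc t))))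
                            (mb_avg (B21 t) (\<lambda>i. Hi21 i (x t, y (Suc t))))
                            (mb_avg (B22 t) (\<lambda>i. Hi22 i (x t, y (Suc t)))))
                \<le> \<alpha> * (norm (s t) + \<epsilon>'))
         \<longrightarrow> (\<exists>k. stop_time s \<epsilon>' = enat k \<and>
                real k \<le> (Phi f x0 - (INF x. Phi f x) + (L2 * (1 + L1 / \<mu>) ^ 3 + 3 * \<alpha> + 4 * \<beta>) * \<epsilon>' ^ 3)
                           / ((L2 * (1 + L1 / \<mu>) ^ 3 + \<alpha> + \<beta>) * \<epsilon>' ^ 3) \<and>
                (Phi f x0 - (INF x. Phi f x) + (L2 * (1 + L1 / \<mu>) ^ 3 + 3 * \<alpha> + 4 * \<beta>) * \<epsilon>' ^ 3)
                           / ((L2 * (1 + L1 / \<mu>) ^ 3 + \<alpha> + \<beta>) * \<epsilon>' ^ 3) \<le> real T \<and>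
                norm (vgrad (Phi f) (x k)) \<le> (1 / (2 * \<eta>x) + L2 * (1 + L1 / \<mu>) ^ 3 + 2 * \<alpha> + 2 * \<beta>) * \<epsilon>' ^ 2 \<and>
                (\<forall>v. - ((1 / (2 * \<eta>x) + L2 * (1 + L1 / \<mu>) ^ 3 + 2 * \<alpha>) * \<epsilon>') * norm v ^ 2
                       \<le> v \<bullet> (hess (Phi f) (x k) *v v)))))"
proof -
  interpret sa f g1 g2 H11 H12 H21 H22 L1 L2 \<mu> using SA by unfold_locales
  interpret tl: taylor "Phi f" "vgrad (Phi f)" "hess (Phi f)" "L2 * (1 + L1 / \<mu>) ^ 3" by (rule is_taylor)
  have L0: "L2 * (1 + L1 / \<mu>) ^ 3 \<ge> 0" by (rule tl.L0)
  have low: "(INF x. Phi f x) \<le> Phi f x" for x by (rule cINF_lower[OF bdd]) simp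
  note C = core[where Phi = "Phi f" and gr = "vgrad (Phi f)" and Hs = "hess (Phi f)" and L = "L2 * (1 + L1 / \<mu>) ^ 3"
     and Ps = "INF x. Phi f x", OF tl.T1 tl.T2 tl.T3 tl.hess_sym low L0 alpha beta eps etax etax_le]
  show ?thesis
  proof (intro conjI allI impI)
    fix \<eta>y N x y s
    assume H: "\<eta>y > 0 \<and> x 0 = x0 \<and> cubic_gda g1 g2 H11 H12 H21 H22 \<eta>x \<eta>y \<epsilon>' N x y s \<and>
       (\<forall>t. enat t < stop_time s \<epsilon>' \<longrightarrow>
          norm (vgrad (Phi f) (x t) - g1 (x t, y (Suc t))) \<le> \<beta> * (norm (s t) ^ 2 + \<epsilon>' ^ 2) \<and>
          mnorm (hess (Phi f) (x t) -
                 schurG (H11 (x t, y (Suc t))) (H12 (x t, y (Suc t)))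
                        (H21 (x t, y (Suc t))) (H22 (x t, y (Suc t)))) \<le> \<alpha> * (norm (s t) + \<epsilon>'))"
    hence x0: "x 0 = x0" and cg: "cubic_gda g1 g2 H11 H12 H21 H22 \<eta>x \<eta>y \<epsilon>' N x y s" by auto
    have R: "\<exists>k. stop_time s \<epsilon>' = enat k \<and>
     real k \<le> (Phi f (x 0) - (INF x. Phi f x) + (L2 * (1 + L1 / \<mu>) ^ 3 + 3 * \<alpha> + 4 * \<beta>) * \<epsilon>' ^ 3) / ((L2 * (1 + L1 / \<mu>) ^ 3 + \<alpha> + \<beta>) * \<epsilon>' ^ 3) \<and>
     norm (vgrad (Phi f) (x k)) \<le> (1 / (2 * \<eta>x) + L2 * (1 + L1 / \<mu>) ^ 3 + 2 * \<alpha> + 2 * \<beta>) * \<epsilon>' ^ 2 \<and>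
     (\<forall>v. - ((1 / (2 * \<eta>x) + L2 * (1 + L1 / \<mu>) ^ 3 + 2 * \<alpha>) * \<epsilon>') * norm v ^ 2 \<le> v \<bullet> (hess (Phi f) (x k) *v v))"
    proof (rule C[where x = x and s = s and gs = "\<lambda>t. g1 (x t, y (Suc t))"
        and Gs = "\<lambda>t. schurG (H11 (x t, y (Suc t))) (H12 (x t, y (Suc t))) (H21 (x t, y (Suc t))) (H22 (x t, y (Suc t)))"])
      show "norm (s 0) = \<epsilon>'" using cg by (simp add: cubic_gda_def)
      show "is_cubic_min (g1 (x t, y (Suc t)))
         (schurG (H11 (x t, y (Suc t))) (H12 (x t, y (Suc t))) (H21 (x t, y (Suc t))) (H22 (x t, y (Suc t)))) \<eta>x (s (Suc t)) \<and>
         x (Suc t) = x t + s (Suc t)" for t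
        using cg unfolding cubic_gda_def by blast
      show "norm (vgrad (Phi f) (x t) - g1 (x t, y (Suc t))) \<le> \<beta> * (norm (s t) ^ 2 + \<epsilon>' ^ 2) \<and>
          mnorm (hess (Phi f) (x t) -
                 schurG (H11 (x t, y (Suc t))) (H12 (x t, y (Suc t)))
                        (H21 (x t, y (Suc t))) (H22 (x t, y (Suc t)))) \<le> \<alpha> * (norm (s t) + \<epsilon>')"
        if "enat t < stop_time s \<epsilon>'" for t
        using H that by blast
    qed
    thus "\<exists>k. stop_time s \<epsilon>' = enat k \<and>
            real k \<le> (Phi f x0 - (INF x. Phi f x) + (L2 * (1 + L1 / \<mu>) ^ 3 + 3 * \<alpha> + 4 * \<beta>) * \<epsilon>' ^ 3)
                       / ((L2 * (1 + L1 / \<mu>) ^ 3 + \<alpha> + \<beta>) * \<epsilon>' ^ 3) \<and>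
            (Phi f x0 - (INF x. Phi f x) + (L2 * (1 + L1 / \<mu>) ^ 3 + 3 * \<alpha> + 4 * \<beta>) * \<epsilon>' ^ 3)
                       / ((L2 * (1 + L1 / \<mu>) ^ 3 + \<alpha> + \<beta>) * \<epsilon>' ^ 3) \<le> real T \<and>
            norm (vgrad (Phi f) (x k)) \<le> (1 / (2 * \<eta>x) + L2 * (1 + L1 / \<mu>) ^ 3 + 2 * \<alpha> + 2 * \<beta>) * \<epsilon>' ^ 2 \<and>
            (\<forall>v. - ((1 / (2 * \<eta>x) + L2 * (1 + L1 / \<mu>) ^ 3 + 2 * \<alpha>) * \<epsilon>') * norm v ^ 2
                   \<le> v \<bullet> (hess (Phi f) (x k) *v v))"
      using T_ge x0 by auto
  next
    fix N \<xi> B1 B11 B12 B21 B22 x y s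
    assume H: "x 0 = x0 \<and>
           scubic_gda Nf gi1 gi2 Hi11 Hi12 Hi21 Hi22 \<mu> \<eta>x \<epsilon>' N \<xi> B1 B11 B12 B21 B22 x y s \<and>
           (\<forall>t. enat t < stop_time s \<epsilon>' \<longrightarrow>
              norm (vgrad (Phi f) (x t) - mb_avg (B1 t) (\<lambda>i. gi1 i (x t, y (Suc t))))
                \<le> \<beta> * (norm (s t) ^ 2 + \<epsilon>' ^ 2) \<and>
              mnorm (hess (Phi f) (x t) -
                     schurG (mb_avg (B11 t) (\<lambda>i. Hi11 i (x t, y (Suc t))))
                            (mb_avg (B12 t) (\<lambda>i. Hi12 i (x t, y (Suc t))))
                            (mb_avg (B21 t) (\<lambda>i. Hi21 i (x t, y (Suc t))))
                            (mb_avg (B22 t) (\<lambda>i. Hi22 i (x t, y (Suc t)))))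
                \<le> \<alpha> * (norm (s t) + \<epsilon>'))"
    hence x0: "x 0 = x0" and cg: "scubic_gda Nf gi1 gi2 Hi11 Hi12 Hi21 Hi22 \<mu> \<eta>x \<epsilon>' N \<xi> B1 B11 B12 B21 B22 x y s" by auto
    have R: "\<exists>k. stop_time s \<epsilon>' = enat k \<and>
     real k \<le> (Phi f (x 0) - (INF x. Phi f x) + (L2 * (1 + L1 / \<mu>) ^ 3 + 3 * \<alpha> + 4 * \<beta>) * \<epsilon>' ^ 3) / ((L2 * (1 + L1 / \<mu>) ^ 3 + \<alpha> + \<beta>) * \<epsilon>' ^ 3) \<and>
     norm (vgrad (Phi f) (x k)) \<le> (1 / (2 * \<eta>x) + L2 * (1 + L1 / \<mu>) ^ 3 + 2 * \<alpha> + 2 * \<beta>) * \<epsilon>' ^ 2 \<and>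
     (\<forall>v. - ((1 / (2 * \<eta>x) + L2 * (1 + L1 / \<mu>) ^ 3 + 2 * \<alpha>) * \<epsilon>') * norm v ^ 2 \<le> v \<bullet> (hess (Phi f) (x k) *v v))"
    proof (rule C[where x = x and s = s and gs = "\<lambda>t. mb_avg (B1 t) (\<lambda>i. gi1 i (x t, y (Suc t)))"
        and Gs = "\<lambda>t. schurG (mb_avg (B11 t) (\<lambda>i. Hi11 i (x t, y (Suc t))))
                            (mb_avg (B12 t) (\<lambda>i. Hi12 i (x t, y (Suc t))))
                            (mb_avg (B21 t) (\<lambda>i. Hi21 i (x t, y (Suc t))))
                            (mb_avg (B22 t) (\<lambda>i. Hi22 i (x t, y (Suc t))))"])
      show "norm (s 0) = \<epsilon>'" using cg by (simp add: scubic_gda_def)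
      show "is_cubic_min (mb_avg (B1 t) (\<lambda>i. gi1 i (x t, y (Suc t))))
             (schurG (mb_avg (B11 t) (\<lambda>i. Hi11 i (x t, y (Suc t))))
                     (mb_avg (B12 t) (\<lambda>i. Hi12 i (x t, y (Suc t))))
                     (mb_avg (B21 t) (\<lambda>i. Hi21 i (x t, y (Suc t))))
                     (mb_avg (B22 t) (\<lambda>i. Hi22 i (x t, y (Suc t))))) \<eta>x (s (Suc t)) \<and>
         x (Suc t) = x t + s (Suc t)" for t
        using cg unfolding scubic_gda_def by blast
      show "norm (vgrad (Phi f) (x t) - mb_avg (B1 t) (\<lambda>i. gi1 i (x t, y (Suc t))))
                \<le> \<beta> * (norm (s t) ^ 2 + \<epsilon>' ^ 2) \<and>
              mnorm (hess (Phi f) (x t) -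
                     schurG (mb_avg (B11 t) (\<lambda>i. Hi11 i (x t, y (Suc t))))
                            (mb_avg (B12 t) (\<lambda>i. Hi12 i (x t, y (Suc t))))
                            (mb_avg (B21 t) (\<lambda>i. Hi21 i (x t, y (Suc t))))
                            (mb_avg (B22 t) (\<lambda>i. Hi22 i (x t, y (Suc t)))))
                \<le> \<alpha> * (norm (s t) + \<epsilon>')"
        if "enat t < stop_time s \<epsilon>'" for t
        using H that by blast
    qed
    thus "\<exists>k. stop_time s \<epsilon>' = enat k \<and>
                real k \<le> (Phi f x0 - (INF x. Phi f x) + (L2 * (1 + L1 / \<mu>) ^ 3 + 3 * \<alpha> + 4 * \<beta>) * \<epsilon>' ^ 3)
                           / ((L2 * (1 + L1 / \<mu>) ^ 3 + \<alpha> + \<beta>) * \<epsilon>' ^ 3) \<and>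
                (Phi f x0 - (INF x. Phi f x) + (L2 * (1 + L1 / \<mu>) ^ 3 + 3 * \<alpha> + 4 * \<beta>) * \<epsilon>' ^ 3)
                           / ((L2 * (1 + L1 / \<mu>) ^ 3 + \<alpha> + \<beta>) * \<epsilon>' ^ 3) \<le> real T \<and>
                norm (vgrad (Phi f) (x k)) \<le> (1 / (2 * \<eta>x) + L2 * (1 + L1 / \<mu>) ^ 3 + 2 * \<alpha> + 2 * \<beta>) * \<epsilon>' ^ 2 \<and>
                (\<forall>v. - ((1 / (2 * \<eta>x) + L2 * (1 + L1 / \<mu>) ^ 3 + 2 * \<alpha>) * \<epsilon>') * norm v ^ 2
                       \<le> v \<bullet> (hess (Phi f) (x k) *v v))"
      using T_ge x0 by auto
  qed
qed

end
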